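(* Let $\bm{\mu}\in X^{\mathcal{L}(\mathcal{T})}$ be the true vector of leaf means and assume $V_{s_0}(\bm{\mu})\neq\theta$. Consider any algorithm that uses the GLR stopping rule $\tau_\delta=\inf\{t\in\mathbb{N}:Z_{s_0}(t)\ge\beta(t,\delta)\}$ and any sampling rule which ensures that, for every leaf $\ell\in\mathcal{L}(\mathcal{T})$, $N_\ell(t)/t\to w^{s_0}_\ell(\bm{\mu})$ almost surely as $t\to\infty$. Then for all $\delta\in(0,1)$, $\mathbb{P}(\tau_\delta<+\infty)=1$, and \[\mathbb{P}_{\bm{\mu}}\Big(\limsup_{\delta\to 0}\frac{\tau_\delta}{\log(1/\delta)}\le\frac{1}{d_{s_0}(\bm{\mu})}\Big)=1.\]
   Context: Tree: finite rooted tree $\mathcal{T}$, node set $S$, root $s_0$, children $\mathcal{C}(s)$, leaves $\mathcal{L}(\mathcal{T})$, $\mathcal{D}(s)$ leaves descending from $s$; internal labels $L(s)\in\{\text{MAX},\text{MIN}\}$. $X\subseteq\mathbb{R}$ mean-parameter set of a one-parameter exponential family; $d(x,y)$ the KL divergence between members with means $x,y$; threshold $\theta\in X$. $V_s(\bm{\lambda})=\lambda_s$ at leaves, max/min of children's values at MAX/MIN nodes; $a_s(\bm{\lambda})=$'win' iff $V_s(\bm{\lambda})\ge\theta$. Recursive weights at $\bm{\mu}$: $a^*=a_{s_0}(\bm{\mu})$; $P=$MAX, $Q=$MIN if $a^*=$'win', swapped if 'lose'. Leaf $s$: $w^s_s=1$, $d_s=d(\mu_s,\theta)$ if ($a^*=$'win',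 $\mu_s\ge\theta$) or ($a^*=$'lose', $\mu_s<\theta$), else $0$. $L(s)=P$: $d_s=\max_c d_c$, fix $c^*(s)\in\arg\max_c d_c$, if $d_s>0$ then $w^s_\ell=w^{c^*(s)}_\ell$ on $\mathcal{D}(c^*(s))$ and $0$ on the other children's leaves. $L(s)=Q$, all $d_c>0$: $d_s=(\sum_c 1/d_c)^{-1}$, $w^s_\ell=\frac{w^c_\ell/d_c}{\sum_{c'}1/d_{c'}}$ for $\ell\in\mathcal{D}(c)$. $L(s)=Q$ otherwise: $d_s=0$. Internal $s$ with $d_s=0$: $\bm{w}^s$ an arbitrary probability vector on $\mathcal{D}(s)$. Sampling model: at each round $t$ a leaf $I(t)$ is chosen and an independent reward drawn from its distribution (mean $\mu_{I(t)}$); $N_\ell(t)$ counts, $\hat\mu_\ell(t)$ empirical means. $Z_{s_0}(t)=\inf_{\bm{\lambda}\in X^{\mathcal{L}(\mathcal{T})}:a_{s_0}(\bm{\lambda})\neq a_{s_0}(\hat{\bm{\mu}}(t))}\sum_\ell N_\ell(t)d(\hat\mu_\ell(t),\lambda_\ell)$. Threshold: $h(x)=x-\ln x$, $h^{-1}:[1,\infty)\to[1,\infty)$ its inverse on $[1,\infty)$; $\tilde h(x)=e^{1/h^{-1}(x)}h^{-1}(x)$ if $x\ge h(1/\ln(3/2))$, else $\frac32(x-\ln\ln\frac32)$; $\mathcal{C}_{\exp}(x)=2\tilde h\big(\frac{h^{-1}(1+x)+\ln(\pi^2/3)}{2}\big)$; $\beta(t,\delta)=3\sum_\ell\log(1+\log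 N_\ell(t))+|\mathcal{L}(\mathcal{T})|\mathcal{C}_{\exp}\big(\frac{\log(1/\delta)}{|\mathcal{L}(\mathcal{T})|}\big)$. *)

theory Defs
  imports "HOL-Probability.Probability"
begin

text \<open>Base measure rho on the reals, natural parameters in an open interval Theta.
  The member with natural parameter eta has density exp(eta x - b(eta)) w.r.t. rho.\<close>

definition lpart :: "real measure \<Rightarrow> real \<Rightarrow> real" where
  "lpart \<rho> \<eta> = ln (\<integral>x. exp (\<eta> * x) \<partial>\<rho>)"

definition ef_dist :: "real measure \<Rightarrow> real \<Rightarrow> real measure" where
  "ef_dist \<rho> \<eta> = density \<rho> (\<lambda>x. ennreal (exp (\<eta> * x - lpart \<rho> \<eta>)))"

definition ef_mean :: "real measure \<Rightarrow> real \<Rightarrow> real" where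
  "ef_mean \<rho> \<eta> = (\<integral>x. x \<partial>(ef_dist \<rho> \<eta>))"

definition exp_family :: "real measure \<Rightarrow> real set \<Rightarrow> bool" where
  "exp_family \<rho> \<Theta> \<longleftrightarrow> sets \<rho> = sets borel \<and> sigma_finite_measure \<rho> \<and>
     open \<Theta> \<and> is_interval \<Theta> \<and> \<Theta> \<noteq> {} \<and>
     (\<forall>\<eta>\<in>\<Theta>. integrable \<rho> (\<lambda>x. exp (\<eta> * x))) \<and>
     \<not> (\<exists>c. AE x in \<rho>. x = c)"

definition mean_set :: "real measure \<Rightarrow> real set \<Rightarrow> real set" where
  "mean_set \<rho> \<Theta> = ef_mean \<rho> ` \<Theta>"

definition nat_param :: "real measure \<Rightarrow> real set \<Rightarrow> real \<Rightarrow> real" where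
  "nat_param \<rho> \<Theta> x = (THE \<eta>. \<eta> \<in> \<Theta> \<and> ef_mean \<rho> \<eta> = x)"

definition fam :: "real measure \<Rightarrow> real set \<Rightarrow> real \<Rightarrow> real measure" where
  "fam \<rho> \<Theta> x = ef_dist \<rho> (nat_param \<rho> \<Theta> x)"

text \<open>d(x,y) = KL(nu_x || nu_y) (natural logarithm).\<close>
definition dKL :: "real measure \<Rightarrow> real set \<Rightarrow> real \<Rightarrow> real \<Rightarrow> real" where
  "dKL \<rho> \<Theta> x y = KL_divergence (exp 1) (fam \<rho> \<Theta> y) (fam \<rho> \<Theta> x)"

text \<open>Extension of d to a first argument outside X (needed for empirical means that
  fall outside X), by the standard variational formula; equals d on X.\<close>
definition dext :: "real measure \<Rightarrow> real set \<Rightarrow> real \<Rightarrow> real \<Rightarrow> ereal" where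
  "dext \<rho> \<Theta> x y = (if x \<in> mean_set \<rho> \<Theta> then ereal (dKL \<rho> \<Theta> x y)
     else (SUP \<eta>\<in>\<Theta>. ereal ((\<eta> - nat_param \<rho> \<Theta> y) * x - lpart \<rho> \<eta> + lpart \<rho> (nat_param \<rho> \<Theta> y))))"

datatype label = MAXn | MINn

datatype 'l mmtree = Leaf 'l | Node label "'l mmtree list"

fun leaves :: "'l mmtree \<Rightarrow> 'l list" where
  "leaves (Leaf l) = [l]"
| "leaves (Node _ cs) = concat (map leaves cs)"

fun wf_tree :: "'l mmtree \<Rightarrow> bool" where
  "wf_tree (Leaf l) = True"
| "wf_tree (Node _ cs) = (cs \<noteq> [] \<and> (\<forall>c\<in>set cs. wf_tree c))"

fun Vval :: "'l mmtree \<Rightarrow> ('l \<Rightarrow> real) \<Rightarrow> real" where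
  "Vval (Leaf l) lam = lam l"
| "Vval (Node MAXn cs) lam = Max (set (map (\<lambda>c. Vval c lam) cs))"
| "Vval (Node MINn cs) lam = Min (set (map (\<lambda>c. Vval c lam) cs))"

text \<open>a_s(lambda): True means 'win', False means 'lose'.\<close>
definition aval :: "'l mmtree \<Rightarrow> real \<Rightarrow> ('l \<Rightarrow> real) \<Rightarrow> bool" where
  "aval T \<theta> lam \<longleftrightarrow> Vval T lam \<ge> \<theta>"

definition Plab :: "bool \<Rightarrow> label" where
  "Plab win = (if win then MAXn else MINn)"

text \<open>d_s for the subtree, given the root answer win = a^*.\<close>
fun dval :: "(real \<Rightarrow> real \<Rightarrow> real) \<Rightarrow> real \<Rightarrow> bool \<Rightarrow> ('l \<Rightarrow> real) \<Rightarrow> 'l mmtree \<Rightarrow> real" where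
  "dval d \<theta> win \<mu> (Leaf l) =
     (if (win \<and> \<mu> l \<ge> \<theta>) \<or> (\<not> win \<and> \<mu> l < \<theta>) then d (\<mu> l) \<theta> else 0)"
| "dval d \<theta> win \<mu> (Node L cs) =
     (if L = Plab win then Max (set (map (dval d \<theta> win \<mu>) cs))
      else if (\<forall>c\<in>set cs. dval d \<theta> win \<mu> c > 0)
        then 1 / (\<Sum>c\<leftarrow>cs. 1 / dval d \<theta> win \<mu> c)
      else 0)"

text \<open>Admissible recursive weight vectors w^s (any choice of arg max and of the
  arbitrary probability vectors is allowed).\<close>
inductive is_w :: "(real \<Rightarrow> real \<Rightarrow> real) \<Rightarrow> real \<Rightarrow> bool \<Rightarrow> ('l \<Rightarrow> real) \<Rightarrow> 'l mmtree \<Rightarrow> ('l \<Rightarrow> real) \<Rightarrow> bool"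
  for d \<theta> win \<mu> where
  leaf: "is_w d \<theta> win \<mu> (Leaf l) (\<lambda>x. if x = l then 1 else 0)"
| pnode: "\<lbrakk> L = Plab win; dval d \<theta> win \<mu> (Node L cs) > 0; i < length cs;
           dval d \<theta> win \<mu> (cs ! i) = dval d \<theta> win \<mu> (Node L cs);
           is_w d \<theta> win \<mu> (cs ! i) w \<rbrakk> \<Longrightarrow> is_w d \<theta> win \<mu> (Node L cs) w"
| qnode: "\<lbrakk> L \<noteq> Plab win; \<forall>c\<in>set cs. dval d \<theta> win \<mu> c > 0;
           \<forall>i<length cs. is_w d \<theta> win \<mu> (cs ! i) (ws i) \<rbrakk> \<Longrightarrow>
           is_w d \<theta> win \<mu> (Node L cs)
             (\<lambda>x. (\<Sum>i<length cs. ws i x / dval d \<theta> win \<mu> (cs ! i)) /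
                  (\<Sum>i<length cs. 1 / dval d \<theta> win \<mu> (cs ! i)))"
| zero: "\<lbrakk> dval d \<theta> win \<mu> (Node L cs) = 0; \<forall>x. w x \<ge> 0;
           \<forall>x. x \<notin> set (leaves (Node L cs)) \<longrightarrow> w x = 0;
           (\<Sum>x\<in>set (leaves (Node L cs)). w x) = 1 \<rbrakk> \<Longrightarrow> is_w d \<theta> win \<mu> (Node L cs) w"

definition hfun :: "real \<Rightarrow> real" where "hfun x = x - ln x"

definition hinv :: "real \<Rightarrow> real" where
  "hinv y = (THE x. x \<ge> 1 \<and> hfun x = y)"

definition htilde :: "real \<Rightarrow> real" where
  "htilde x = (if x \<ge> hfun (1 / ln (3/2)) then exp (1 / hinv x) * hinv x
               else 3/2 * (x - ln (ln (3/2))))"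

definition Cexp :: "real \<Rightarrow> real" where
  "Cexp x = 2 * htilde ((hinv (1 + x) + ln (pi^2 / 3)) / 2)"

section \<open>Sampling model (rounds t = 1, 2, ...; stack-of-rewards model)\<close>

definition Ncnt :: "(nat \<Rightarrow> 'w \<Rightarrow> 'l) \<Rightarrow> 'l \<Rightarrow> nat \<Rightarrow> 'w \<Rightarrow> nat" where
  "Ncnt I l t \<omega> = card {s \<in> {1..t}. I s \<omega> = l}"

text \<open>The k-th pull (k = 0,1,...) of leaf l yields Y l k; reward observed at round s.\<close>
definition obs :: "(nat \<Rightarrow> 'w \<Rightarrow> 'l) \<Rightarrow> ('l \<Rightarrow> nat \<Rightarrow> 'w \<Rightarrow> real) \<Rightarrow> nat \<Rightarrow> 'w \<Rightarrow> real" where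
  "obs I Y s \<omega> = Y (I s \<omega>) (Ncnt I (I s \<omega>) (s - 1) \<omega>) \<omega>"

definition muhat :: "(nat \<Rightarrow> 'w \<Rightarrow> 'l) \<Rightarrow> ('l \<Rightarrow> nat \<Rightarrow> 'w \<Rightarrow> real) \<Rightarrow> nat \<Rightarrow> 'w \<Rightarrow> 'l \<Rightarrow> real" where
  "muhat I Y t \<omega> l = (\<Sum>k<Ncnt I l t \<omega>. Y l k \<omega>) / real (Ncnt I l t \<omega>)"

definition Zstat :: "real measure \<Rightarrow> real set \<Rightarrow> real \<Rightarrow> 'l mmtree \<Rightarrow> (nat \<Rightarrow> 'w \<Rightarrow> 'l) \<Rightarrow>
    ('l \<Rightarrow> nat \<Rightarrow> 'w \<Rightarrow> real) \<Rightarrow> nat \<Rightarrow> 'w \<Rightarrow> ereal" where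
  "Zstat \<rho> \<Theta> \<theta> T I Y t \<omega> =
     (INF lam\<in>{lam. (\<forall>l\<in>set (leaves T). lam l \<in> mean_set \<rho> \<Theta>) \<and>
                 aval T \<theta> lam \<noteq> aval T \<theta> (muhat I Y t \<omega>)}.
        \<Sum>l\<in>set (leaves T). ereal (real (Ncnt I l t \<omega>)) * dext \<rho> \<Theta> (muhat I Y t \<omega> l) (lam l))"

definition beta :: "'l mmtree \<Rightarrow> (nat \<Rightarrow> 'w \<Rightarrow> 'l) \<Rightarrow> nat \<Rightarrow> real \<Rightarrow> 'w \<Rightarrow> real" where
  "beta T I t \<delta> \<omega> =
     3 * (\<Sum>l\<in>set (leaves T). ln (1 + ln (real (Ncnt I l t \<omega>))))
     + real (card (set (leaves T))) * Cexp (ln (1 / \<delta>) / real (card (set (leaves T))))"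

definition tau :: "real measure \<Rightarrow> real set \<Rightarrow> real \<Rightarrow> 'l mmtree \<Rightarrow> (nat \<Rightarrow> 'w \<Rightarrow> 'l) \<Rightarrow>
    ('l \<Rightarrow> nat \<Rightarrow> 'w \<Rightarrow> real) \<Rightarrow> real \<Rightarrow> 'w \<Rightarrow> enat" where
  "tau \<rho> \<Theta> \<theta> T I Y \<delta> \<omega> =
     (if \<exists>t. Zstat \<rho> \<Theta> \<theta> T I Y t \<omega> \<ge> ereal (beta T I t \<delta> \<omega>)
      then enat (LEAST t. Zstat \<rho> \<Theta> \<theta> T I Y t \<omega> \<ge> ereal (beta T I t \<delta> \<omega>))
      else \<infinity>)"

end

theory Submission
  imports Defs "HOL-Library.Discrete_Functions" "HOL-Real_Asymp.Real_Asymp"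
begin

definition altv :: "bool \<Rightarrow> real \<Rightarrow> real \<Rightarrow> bool" where
  "altv win \<theta> v = (if win then v < \<theta> else \<theta> \<le> v)"

lemma is_w_props:
  assumes "is_w d \<theta> win \<mu> s ws"
  shows "(\<forall>x. ws x \<ge> 0) \<and> (\<forall>x. x \<notin> set (leaves s) \<longrightarrow> ws x = 0)"
  using assms
proof (induction rule: is_w.induct)
  case (leaf l)
  then show ?case by auto
next
  case (pnode L cs i w)
  then show ?case by (auto dest!: nth_mem)
next
  case (qnode L cs ws)
  have pos: "\<forall>i<length cs. dval d \<theta> win \<mu> (cs ! i) > 0" using qnode.hyps(2) by auto
  show ?case
  proof (intro conjI allI impI)
    fix x
    show "0 \<le> (\<Sum>i<length cs. ws i x / dval d \<theta> win \<mu> (cs ! i)) / (\<Sum>i<length cs. 1 / dval d \<theta> win \<mu> (cs ! i))"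
      using qnode.IH pos by (intro divide_nonneg_nonneg sum_nonneg) (auto intro!: divide_nonneg_pos less_imp_le)
  next
    fix x assume "x \<notin> set (leaves (Node L cs))"
    then have "\<forall>i<length cs. x \<notin> set (leaves (cs ! i))" by (auto dest!: nth_mem)
    then show "(\<Sum>i<length cs. ws i x / dval d \<theta> win \<mu> (cs ! i)) / (\<Sum>i<length cs. 1 / dval d \<theta> win \<mu> (cs ! i)) = 0"
      using qnode.IH by simp
  qed
next
  case (zero L cs w)
  then show ?case by auto
qed

lemma dval_pos_nonempty:
  assumes "dval d \<theta> win \<mu> (Node L cs) > 0" "L \<noteq> Plab win" shows "cs \<noteq> []"
  using assms by (auto split: if_splits)

lemma is_w_leafpos:
  assumes "is_w d \<theta> win \<mu> s ws" "dval d \<theta> win \<mu> s > 0" "ws l > 0"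
  shows "dval d \<theta> win \<mu> (Leaf l) > 0 \<and> l \<in> set (leaves s)"
  using assms
proof (induction rule: is_w.induct)
  case (leaf l')
  then show ?case by (auto split: if_splits)
next
  case (pnode L cs i w)
  then show ?case by (auto dest!: nth_mem)
next
  case (qnode L cs ws)
  have pos: "\<forall>i<length cs. dval d \<theta> win \<mu> (cs ! i) > 0" using qnode.hyps(2) by auto
  have "(\<Sum>i<length cs. ws i l / dval d \<theta> win \<mu> (cs ! i)) \<noteq> 0"
    using qnode.prems(2) by (metis div_0 less_irrefl)
  then obtain i where i: "i < length cs" "ws i l / dval d \<theta> win \<mu> (cs ! i) \<noteq> 0"
    by (metis (no_types, lifting) lessThan_iff less_irrefl sum.neutral)
  have "is_w d \<theta> win \<mu> (cs!i) (ws i)" using qnode.IH i(1) by blast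
  then have "ws i l \<ge> 0" using is_w_props by blast
  with i pos have "ws i l > 0" by force
  then have "dval d \<theta> win \<mu> (Leaf l) > 0 \<and> l \<in> set (leaves (cs!i))"
    using qnode.IH i(1) pos by blast
  moreover have "set (leaves (cs!i)) \<subseteq> set (leaves (Node L cs))"
    using i(1) by (auto dest!: nth_mem)
  ultimately show ?case by blast
next
  case (zero L cs w)
  then show ?case by auto
qed

lemma sum_list_idx: "sum_list (map f cs) = (\<Sum>i<length cs. f (cs!i))"
  by (simp add: sum_list_sum_nth atLeast0LessThan)

lemma qnode_wpos:
  fixes D :: "nat \<Rightarrow> real"
  assumes "j < n" "ws j l > 0" "\<forall>i<n. ws i l \<ge> 0" "\<forall>i<n. D i > 0"
  shows "(\<Sum>i<n. ws i l / D i) / (\<Sum>i<n. 1 / D i) > 0"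
proof -
  have "0 < ws j l / D j" using assms by simp
  also have "\<dots> \<le> (\<Sum>i<n. ws i l / D i)"
    using assms by (intro member_le_sum) auto
  finally have a: "0 < (\<Sum>i<n. ws i l / D i)" .
  have "0 < 1 / D j" using assms by simp
  also have "\<dots> \<le> (\<Sum>i<n. 1 / D i)"
    using assms by (intro member_le_sum) auto
  finally have b: "0 < (\<Sum>i<n. 1 / D i)" .
  show ?thesis using a b by simp
qed

lemma alt_child_P:
  assumes "L = Plab win" "altv win \<theta> (Vval (Node L cs) lam)" "i < length cs"
  shows "altv win \<theta> (Vval (cs ! i) lam)"
proof (cases win)
  case True
  then have "L = MAXn" using assms by (simp add: Plab_def)
  then have "Vval (cs!i) lam \<le> Vval (Node L cs) lam" using assms(3) by (auto intro!: Max_ge)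
  then show ?thesis using assms True by (auto simp: altv_def)
next
  case False
  then have "L = MINn" using assms by (simp add: Plab_def)
  then have "Vval (cs!i) lam \<ge> Vval (Node L cs) lam" using assms(3) by (auto intro!: Min_le)
  then show ?thesis using assms False by (auto simp: altv_def)
qed

lemma alt_child_Q:
  assumes "L \<noteq> Plab win" "altv win \<theta> (Vval (Node L cs) lam)" "cs \<noteq> []"
  shows "\<exists>j<length cs. altv win \<theta> (Vval (cs ! j) lam)"
proof (cases win)
  case True
  then have "L = MINn" using assms by (cases L) (auto simp: Plab_def)
  then have "Min ((\<lambda>c. Vval c lam) ` set cs) < \<theta>" using assms True by (simp add: altv_def)
  then obtain c where "c \<in> set cs" "Vval c lam < \<theta>" using assms(3) by (subst (asm) Min_less_iff) auto
  then show ?thesis using True by (auto simp: altv_def in_set_conv_nth)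
next
  case False
  then have "L = MAXn" using assms by (cases L) (auto simp: Plab_def)
  then have "\<theta> \<le> Max ((\<lambda>c. Vval c lam) ` set cs)" using assms False by (simp add: altv_def)
  then obtain c where "c \<in> set cs" "\<theta> \<le> Vval c lam" using assms(3) by (subst (asm) Max_ge_iff) auto
  then show ?thesis using False by (auto simp: altv_def in_set_conv_nth)
qed

lemma dval_Q:
  assumes "L \<noteq> Plab win" "\<forall>c\<in>set cs. dval d \<theta> win \<mu> c > 0"
  shows "dval d \<theta> win \<mu> (Node L cs) = 1 / (\<Sum>i<length cs. 1 / dval d \<theta> win \<mu> (cs!i))"
  using assms by (simp add: sum_list_idx)

lemma is_w_alt:
  assumes "is_w d \<theta> win \<mu> s ws" "dval d \<theta> win \<mu> s > 0" "altv win \<theta> (Vval s lam)"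
  shows "\<exists>l. ws l > 0 \<and> altv win \<theta> (lam l)"
  using assms
proof (induction rule: is_w.induct)
  case (leaf l)
  then show ?case by (intro exI[of _ l]) auto
next
  case (pnode L cs i w)
  have "dval d \<theta> win \<mu> (cs!i) > 0" using pnode.hyps(2,4) by simp
  then show ?case using alt_child_P[OF pnode.hyps(1) pnode.prems(2) pnode.hyps(3)] pnode.IH by blast
next
  case (qnode L cs ws)
  have pos: "\<forall>i<length cs. dval d \<theta> win \<mu> (cs ! i) > 0" using qnode.hyps(2) by auto
  have ne: "cs \<noteq> []" using dval_pos_nonempty qnode.prems(1) qnode.hyps(1) by blast
  obtain j where j: "j < length cs" "altv win \<theta> (Vval (cs ! j) lam)"
    using alt_child_Q[OF qnode.hyps(1) qnode.prems(2) ne] by blast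
  obtain l where l: "ws j l > 0" "altv win \<theta> (lam l)" using qnode.IH j pos by blast
  have "\<forall>i<length cs. ws i l \<ge> 0"
    using qnode.IH is_w_props by blast
  then show ?case using qnode_wpos[of j "length cs" ws l "\<lambda>i. dval d \<theta> win \<mu> (cs ! i)"] j(1) l pos by auto
next
  case (zero L cs w)
  then show ?case by auto
qed

lemma is_w_lower:
  assumes "is_w d \<theta> win \<mu> s ws" "dval d \<theta> win \<mu> s > 0" "altv win \<theta> (Vval s lam)"
    and "finite A" "set (leaves s) \<subseteq> A" "\<forall>l\<in>A. e l \<ge> 0" "\<epsilon> \<ge> 0"
    and "\<forall>l. ws l > 0 \<longrightarrow> altv win \<theta> (lam l) \<longrightarrow> e l \<ge> dval d \<theta> win \<mu> (Leaf l) - \<epsilon>"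
  shows "(\<Sum>l\<in>A. ws l * e l) \<ge> dval d \<theta> win \<mu> s - \<epsilon>"
  using assms
proof (induction rule: is_w.induct)
  case (leaf l)
  have "(\<Sum>x\<in>A. (if x = l then 1 else 0) * e x) = (\<Sum>x\<in>A. (if x = l then e x else 0))"
    by (intro sum.cong) auto
  also have "\<dots> = e l" using leaf.prems by (simp add: sum.delta)
  finally have "(\<Sum>x\<in>A. (if x = l then 1 else 0) * e x) = e l" .
  then show ?case using leaf.prems by auto
next
  case (pnode L cs i w)
  have "set (leaves (cs!i)) \<subseteq> A" using pnode.prems pnode.hyps(3) by (auto dest!: nth_mem)
  moreover have "dval d \<theta> win \<mu> (cs!i) > 0" using pnode.hyps(2,4) by simp
  moreover note alt_child_P[OF pnode.hyps(1) pnode.prems(2) pnode.hyps(3)]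
  ultimately have "(\<Sum>l\<in>A. w l * e l) \<ge> dval d \<theta> win \<mu> (cs!i) - \<epsilon>"
    using pnode.IH pnode.prems by blast
  then show ?case using pnode.hyps(4) by simp
next
  case (qnode L cs ws)
  define D where "D i = dval d \<theta> win \<mu> (cs ! i)" for i
  define S where "S = (\<Sum>i<length cs. 1 / D i)"
  have pos: "\<forall>i<length cs. D i > 0" using qnode.hyps(2) by (auto simp: D_def)
  have ne: "cs \<noteq> []" using dval_pos_nonempty qnode.prems(1) qnode.hyps(1) by blast
  obtain j where j: "j < length cs" "altv win \<theta> (Vval (cs ! j) lam)"
    using alt_child_Q[OF qnode.hyps(1) qnode.prems(2) ne] by blast
  have wsi: "is_w d \<theta> win \<mu> (cs!i) (ws i)" if "i < length cs" for i using qnode.IH that by blast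
  have nn: "ws i l \<ge> 0" if "i < length cs" for i l using is_w_props[OF wsi[OF that]] by blast
  have hyp: "\<forall>l. ws j l > 0 \<longrightarrow> altv win \<theta> (lam l) \<longrightarrow> e l \<ge> dval d \<theta> win \<mu> (Leaf l) - \<epsilon>"
  proof (intro allI impI)
    fix l assume "ws j l > 0" "altv win \<theta> (lam l)"
    then show "e l \<ge> dval d \<theta> win \<mu> (Leaf l) - \<epsilon>"
      using qnode.prems(7) qnode_wpos[OF j(1), of ws l D] nn pos j(1) by (auto simp: D_def)
  qed
  have sub: "set (leaves (cs!j)) \<subseteq> A" using qnode.prems j(1) by (auto dest!: nth_mem)
  have IHj: "(\<Sum>l\<in>A. ws j l * e l) \<ge> D j - \<epsilon>"
    using qnode.IH j pos hyp sub qnode.prems by (auto simp: D_def)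
  have Spos: "S > 0" unfolding S_def using pos ne by (intro sum_pos) auto
  have SD: "S \<ge> 1 / D j" unfolding S_def using pos j by (intro member_le_sum) auto
  have eq: "(\<Sum>l\<in>A. (\<Sum>i<length cs. ws i l / D i) / S * e l) = (\<Sum>i<length cs. (\<Sum>l\<in>A. ws i l * e l) / D i) / S"
  proof -
    have "(\<Sum>l\<in>A. (\<Sum>i<length cs. ws i l / D i) / S * e l) = (\<Sum>l\<in>A. \<Sum>i<length cs. ws i l * e l / D i / S)"
      unfolding sum_divide_distrib sum_distrib_right by (intro sum.cong refl) simp
    also have "\<dots> = (\<Sum>i<length cs. \<Sum>l\<in>A. ws i l * e l / D i / S)" by (rule sum.swap)
    also have "\<dots> = (\<Sum>i<length cs. (\<Sum>l\<in>A. ws i l * e l) / D i) / S"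
      by (simp add: sum_divide_distrib)
    finally show ?thesis .
  qed
  have big: "(\<Sum>i<length cs. (\<Sum>l\<in>A. ws i l * e l) / D i) \<ge> (\<Sum>l\<in>A. ws j l * e l) / D j"
    using j pos nn qnode.prems(5) by (intro member_le_sum divide_nonneg_pos sum_nonneg mult_nonneg_nonneg) auto
  then have "(\<Sum>i<length cs. (\<Sum>l\<in>A. ws i l * e l) / D i) / S \<ge> (D j - \<epsilon>) / D j / S"
  proof -
    have "(D j - \<epsilon>) / D j \<le> (\<Sum>l\<in>A. ws j l * e l) / D j"
      using IHj pos j by (intro divide_right_mono) auto
    then show ?thesis using big Spos by (intro divide_right_mono) auto
  qed
  moreover have "(D j - \<epsilon>) / D j / S \<ge> 1 / S - \<epsilon>"
  proof -
    have Dj: "D j > 0" using pos j by simp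
    have "(D j - \<epsilon>) / D j / S = 1 / S - \<epsilon> / (D j * S)" using Dj Spos by (simp add: field_simps)
    moreover have "\<epsilon> / (D j * S) \<le> \<epsilon> / 1"
    proof (rule divide_left_mono)
      show "1 \<le> D j * S" using SD Dj by (simp add: divide_le_eq mult.commute)
    qed (use Dj Spos qnode.prems(6) in auto)
    ultimately show ?thesis by simp
  qed
  moreover have "dval d \<theta> win \<mu> (Node L cs) = 1 / S"
    using dval_Q[OF qnode.hyps(1,2)] by (simp add: S_def D_def)
  ultimately have fin: "dval d \<theta> win \<mu> (Node L cs) - \<epsilon> \<le> (\<Sum>l\<in>A. (\<Sum>i<length cs. ws i l / D i) / S * e l)"
    using eq by linarith
  then show ?case unfolding D_def S_def by simp
next
  case (zero L cs w)
  then show ?case by auto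
qed

lemma dval_pos:
  assumes "wf_tree s" "\<forall>l\<in>set (leaves s). \<mu> l \<noteq> \<theta> \<longrightarrow> d (\<mu> l) \<theta> > 0"
    "if win then \<theta> < Vval s \<mu> else Vval s \<mu> < \<theta>"
  shows "dval d \<theta> win \<mu> s > 0"
  using assms
proof (induction s)
  case (Leaf l)
  then show ?case by (auto split: if_splits)
next
  case (Node L cs)
  have ne: "cs \<noteq> []" using Node.prems by simp
  have IH: "dval d \<theta> win \<mu> c > 0" if "c \<in> set cs" "if win then \<theta> < Vval c \<mu> else Vval c \<mu> < \<theta>" for c
    using Node.IH[OF that(1)] Node.prems that by auto
  show ?case
  proof (cases "L = Plab win")
    case True
    have "\<exists>c\<in>set cs. if win then \<theta> < Vval c \<mu> else Vval c \<mu> < \<theta>"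
    proof (cases win)
      case True
      then have "L = MAXn" using \<open>L = Plab win\<close> by (simp add: Plab_def)
      then show ?thesis using Node.prems(3) True ne by (simp add: Max_gr_iff)
    next
      case False
      then have "L = MINn" using \<open>L = Plab win\<close> by (simp add: Plab_def)
      then show ?thesis using Node.prems(3) False ne by (simp add: Min_less_iff)
    qed
    then obtain c where c: "c \<in> set cs" "dval d \<theta> win \<mu> c > 0" using IH by blast
    then show ?thesis using True ne by (auto simp: Max_gr_iff)
  next
    case False
    have all: "\<forall>c\<in>set cs. if win then \<theta> < Vval c \<mu> else Vval c \<mu> < \<theta>"
    proof (cases win)
      case True
      then have "L = MINn" using False by (cases L) (simp_all add: Plab_def)
      then show ?thesis using Node.prems(3) True ne by (simp add: Min_gr_iff)
    next
      case win: False
      then have "L = MAXn" using False by (cases L) (simp_all add: Plab_def)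
      then show ?thesis using Node.prems(3) win ne by (simp add: Max_less_iff)
    qed
    then have allp: "\<forall>c\<in>set cs. dval d \<theta> win \<mu> c > 0" using IH by blast
    have "(\<Sum>i<length cs. 1 / dval d \<theta> win \<mu> (cs!i)) > 0"
      using allp ne by (intro sum_pos) (auto dest!: nth_mem)
    then show ?thesis using dval_Q[OF False allp] by simp
  qed
qed

lemma exp_strict: fixes u :: real assumes "u \<noteq> 0" shows "1 + u < exp u"
proof (cases "1 + u/2 \<ge> 0")
  case True
  have "(1 + u/2)^2 \<le> exp (u/2) ^ 2"
    using True by (intro power_mono) auto
  also have "\<dots> = exp u" by (simp add: exp_double[symmetric] power2_eq_square exp_add[symmetric])
  finally have "(1 + u/2)^2 \<le> exp u" .
  moreover have "1 + u < (1 + u/2)^2"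
  proof -
    have "u^2 > 0" using assms by simp
    then show ?thesis by (simp add: power2_eq_square field_simps)
  qed
  ultimately show ?thesis by simp
next
  case False
  then have "1 + u < 0" by simp
  then show ?thesis using exp_gt_zero[of u] by linarith
qed

definition pd :: "real measure \<Rightarrow> real \<Rightarrow> real \<Rightarrow> real" where
  "pd \<rho> \<eta> x = exp (\<eta> * x - lpart \<rho> \<eta>)"

context
  fixes \<rho> :: "real measure" and \<Theta> :: "real set"
  assumes fam: "exp_family \<rho> \<Theta>"
begin

lemma sets_rho: "sets \<rho> = sets borel" using fam by (simp add: exp_family_def)

lemma meas_rho: "f \<in> borel_measurable borel \<Longrightarrow> f \<in> borel_measurable \<rho>"
  using measurable_cong_sets[OF sets_rho refl] by blast

lemma sf_rho: "sigma_finite_measure \<rho>" using fam by (simp add: exp_family_def)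

lemma int_exp: "\<eta> \<in> \<Theta> \<Longrightarrow> integrable \<rho> (\<lambda>x. exp (\<eta> * x))"
  using fam by (simp add: exp_family_def)

lemma nondeg: "\<not> (AE x in \<rho>. x = c)"
  using fam by (simp add: exp_family_def)

lemma Z_pos: assumes "\<eta> \<in> \<Theta>" shows "(\<integral>x. exp (\<eta> * x) \<partial>\<rho>) > 0"
proof -
  have ge: "(\<integral>x. exp (\<eta> * x) \<partial>\<rho>) \<ge> 0" by (intro integral_nonneg_AE) auto
  moreover have "(\<integral>x. exp (\<eta> * x) \<partial>\<rho>) \<noteq> 0"
  proof
    assume "(\<integral>x. exp (\<eta> * x) \<partial>\<rho>) = 0"
    then have "AE x in \<rho>. exp (\<eta> * x) = 0"
      using integral_nonneg_eq_0_iff_AE[OF int_exp[OF assms]] by auto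
    then have "AE x in \<rho>. x = 0" by (rule eventually_mono) simp
    then show False using nondeg by blast
  qed
  ultimately show ?thesis by linarith
qed

lemma pd_eq: assumes "\<eta> \<in> \<Theta>" shows "pd \<rho> \<eta> x = exp (\<eta> * x) / (\<integral>x. exp (\<eta> * x) \<partial>\<rho>)"
  using Z_pos[OF assms] by (simp add: pd_def lpart_def exp_diff)

lemma pd_fun: "pd \<rho> \<eta> = (\<lambda>x. exp (\<eta> * x - lpart \<rho> \<eta>))"
  by (simp add: fun_eq_iff pd_def)

lemma pd_meas[measurable]: "pd \<rho> \<eta> \<in> borel_measurable \<rho>"
  by (rule meas_rho) (simp add: pd_fun)

lemma pd_pos: "pd \<rho> \<eta> x > 0" by (simp add: pd_def)

lemma pd_ne0: "pd \<rho> \<eta> x \<noteq> 0" by (simp add: pd_def)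

lemma int_pd: assumes "\<eta> \<in> \<Theta>" shows "integrable \<rho> (pd \<rho> \<eta>)"
proof -
  have "pd \<rho> \<eta> = (\<lambda>x. exp (\<eta> * x) / (\<integral>x. exp (\<eta> * x) \<partial>\<rho>))"
    using pd_eq[OF assms] by (simp add: fun_eq_iff)
  then show ?thesis using int_exp[OF assms] by simp
qed

lemma integral_pd: assumes "\<eta> \<in> \<Theta>" shows "(\<integral>x. pd \<rho> \<eta> x \<partial>\<rho>) = 1"
  using Z_pos[OF assms] by (simp add: pd_eq[OF assms])

lemma step_in: assumes "\<eta> \<in> \<Theta>" obtains h where "h > 0" "\<eta> + h \<in> \<Theta>" "\<eta> - h \<in> \<Theta>"
proof -
  have "open \<Theta>" using fam by (simp add: exp_family_def)
  then obtain e where e: "e > 0" "ball \<eta> e \<subseteq> \<Theta>" using assms openE by blast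
  have "\<eta> + e/2 \<in> ball \<eta> e" "\<eta> - e/2 \<in> ball \<eta> e" using e(1) by (auto simp: dist_real_def)
  then have "\<eta> + e/2 \<in> \<Theta>" "\<eta> - e/2 \<in> \<Theta>" using e(2) by auto
  then show ?thesis using that[of "e/2"] e(1) by simp
qed

lemma abs_le_exp: fixes t h :: real assumes "h > 0" shows "\<bar>t\<bar> \<le> (exp (h*t) + exp (-(h*t))) / h"
proof -
  have "h * \<bar>t\<bar> \<le> exp (h * \<bar>t\<bar>)" using exp_ge_add_one_self[of "h*\<bar>t\<bar>"] by linarith
  also have "\<dots> \<le> exp (h*t) + exp (-(h*t))" by (cases "t \<ge> 0") (auto simp: abs_if)
  finally show ?thesis using assms by (simp add: field_simps mult.commute)
qed

lemma sq_le_exp: fixes t h :: real assumes "h > 0" shows "t^2 \<le> 4 * (exp (h*t) + exp (-(h*t))) / h^2"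
proof -
  have "h * \<bar>t\<bar> / 2 \<le> exp (h * \<bar>t\<bar> / 2)" using exp_ge_add_one_self[of "h*\<bar>t\<bar>/2"] by linarith
  then have "(h * \<bar>t\<bar> / 2)^2 \<le> exp (h * \<bar>t\<bar> / 2) ^ 2" using assms by (intro power_mono) auto
  also have "\<dots> = exp (h * \<bar>t\<bar>)" by (simp add: power2_eq_square exp_add[symmetric])
  also have "\<dots> \<le> exp (h*t) + exp (-(h*t))" by (cases "t \<ge> 0") (auto simp: abs_if)
  finally have "(h * \<bar>t\<bar> / 2)^2 \<le> exp (h*t) + exp (-(h*t))" .
  moreover have "(h * \<bar>t\<bar> / 2)^2 = h^2 * t^2 / 4" by (simp add: power_mult_distrib power_divide)
  ultimately have "h^2 * t^2 / 4 \<le> exp (h*t) + exp (-(h*t))" by simp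
  then show ?thesis using assms by (simp add: field_simps)
qed

lemma int_x_exp: assumes "\<eta> \<in> \<Theta>" shows "integrable \<rho> (\<lambda>x. x * exp (\<eta> * x))"
proof -
  obtain h where h: "h > 0" "\<eta> + h \<in> \<Theta>" "\<eta> - h \<in> \<Theta>" using step_in[OF assms] by blast
  have "integrable \<rho> (\<lambda>x. (exp ((\<eta>+h) * x) + exp ((\<eta>-h) * x)) / h)"
    using int_exp[OF h(2)] int_exp[OF h(3)] by auto
  then show ?thesis
  proof (rule Bochner_Integration.integrable_bound)
    show "(\<lambda>x. x * exp (\<eta> * x)) \<in> borel_measurable \<rho>" by (rule meas_rho) simp
    show "AE x in \<rho>. norm (x * exp (\<eta> * x)) \<le> norm ((exp ((\<eta> + h) * x) + exp ((\<eta> - h) * x)) / h)"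
    proof (intro AE_I2)
      fix x
      have "\<bar>x\<bar> * exp (\<eta> * x) \<le> (exp (h*x) + exp (-(h*x))) / h * exp (\<eta> * x)"
        using abs_le_exp[OF h(1), of x] by (intro mult_right_mono) auto
      also have "\<dots> = (exp ((\<eta> + h) * x) + exp ((\<eta> - h) * x)) / h"
        by (simp add: field_simps exp_add[symmetric])
      finally show "norm (x * exp (\<eta> * x)) \<le> norm ((exp ((\<eta> + h) * x) + exp ((\<eta> - h) * x)) / h)"
        using h(1) by (simp add: abs_mult)
    qed
  qed
qed

lemma int_x2_exp: assumes "\<eta> \<in> \<Theta>" shows "integrable \<rho> (\<lambda>x. x^2 * exp (\<eta> * x))"
proof -
  obtain h where h: "h > 0" "\<eta> + h \<in> \<Theta>" "\<eta> - h \<in> \<Theta>" using step_in[OF assms] by blast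
  have "integrable \<rho> (\<lambda>x. 4 * (exp ((\<eta>+h) * x) + exp ((\<eta>-h) * x)) / h^2)"
    using int_exp[OF h(2)] int_exp[OF h(3)] by auto
  then show ?thesis
  proof (rule Bochner_Integration.integrable_bound)
    show "(\<lambda>x. x^2 * exp (\<eta> * x)) \<in> borel_measurable \<rho>" by (rule meas_rho) simp
    show "AE x in \<rho>. norm (x^2 * exp (\<eta> * x)) \<le> norm (4 * (exp ((\<eta> + h) * x) + exp ((\<eta> - h) * x)) / h^2)"
    proof (intro AE_I2)
      fix x
      have "x^2 * exp (\<eta> * x) \<le> 4 * (exp (h*x) + exp (-(h*x))) / h^2 * exp (\<eta> * x)"
        using sq_le_exp[OF h(1), of x] by (intro mult_right_mono) auto
      also have "\<dots> = 4 * (exp ((\<eta> + h) * x) + exp ((\<eta> - h) * x)) / h^2"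
        by (simp add: field_simps exp_add[symmetric])
      finally show "norm (x^2 * exp (\<eta> * x)) \<le> norm (4 * (exp ((\<eta> + h) * x) + exp ((\<eta> - h) * x)) / h^2)"
        using h(1) by simp
    qed
  qed
qed

lemma int_pd_x: assumes "\<eta> \<in> \<Theta>" shows "integrable \<rho> (\<lambda>x. pd \<rho> \<eta> x * x)"
  using int_x_exp[OF assms] by (simp add: pd_eq[OF assms] mult.commute)

lemma int_pd_x2: assumes "\<eta> \<in> \<Theta>" shows "integrable \<rho> (\<lambda>x. pd \<rho> \<eta> x * x^2)"
  using int_x2_exp[OF assms] by (simp add: pd_eq[OF assms] mult.commute)

lemma ef_dist_eq: "ef_dist \<rho> \<eta> = density \<rho> (\<lambda>x. ennreal (pd \<rho> \<eta> x))"
  by (simp add: ef_dist_def pd_def)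

lemma ef_mean_eq: "ef_mean \<rho> \<eta> = (\<integral>x. pd \<rho> \<eta> x * x \<partial>\<rho>)"
  unfolding ef_mean_def ef_dist_eq
  by (subst integral_real_density) (auto intro: less_imp_le[OF pd_pos] meas_rho)

lemma ef_dist_prob: assumes "\<eta> \<in> \<Theta>" shows "prob_space (ef_dist \<rho> \<eta>)"
proof
  have "emeasure (ef_dist \<rho> \<eta>) (space (ef_dist \<rho> \<eta>)) = (\<integral>\<^sup>+x. ennreal (pd \<rho> \<eta> x) \<partial>\<rho>)"
    unfolding ef_dist_eq by (simp add: emeasure_density)
  also have "\<dots> = ennreal (\<integral>x. pd \<rho> \<eta> x \<partial>\<rho>)"
    by (rule nn_integral_eq_integral[OF int_pd[OF assms]]) (auto intro: less_imp_le[OF pd_pos])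
  also have "\<dots> = 1" using integral_pd[OF assms] by simp
  finally show "emeasure (ef_dist \<rho> \<eta>) (space (ef_dist \<rho> \<eta>)) = 1" .
qed

lemma gibbs:
  assumes "\<eta>1 \<in> \<Theta>" "\<eta>2 \<in> \<Theta>"
  shows "(\<eta>2 - \<eta>1) * ef_mean \<rho> \<eta>1 - lpart \<rho> \<eta>2 + lpart \<rho> \<eta>1 \<le> 0"
    and "\<eta>1 \<noteq> \<eta>2 \<Longrightarrow> (\<eta>2 - \<eta>1) * ef_mean \<rho> \<eta>1 - lpart \<rho> \<eta>2 + lpart \<rho> \<eta>1 < 0"
proof -
  define a where "a = \<eta>2 - \<eta>1"
  define c where "c = lpart \<rho> \<eta>2 - lpart \<rho> \<eta>1"
  define m where "m = ef_mean \<rho> \<eta>1"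
  have pd2: "pd \<rho> \<eta>2 x = pd \<rho> \<eta>1 x * exp (a*x - c)" for x
    by (simp add: pd_def a_def c_def exp_add[symmetric] algebra_simps)
  have eqI: "(\<lambda>x. pd \<rho> \<eta>1 x * (a*x - c)) = (\<lambda>x. a * (pd \<rho> \<eta>1 x * x) - c * pd \<rho> \<eta>1 x)"
    by (simp add: fun_eq_iff algebra_simps)
  have intI: "integrable \<rho> (\<lambda>x. pd \<rho> \<eta>1 x * (a*x - c))"
    unfolding eqI using int_pd_x[OF assms(1)] int_pd[OF assms(1)] by auto
  have I1: "(\<integral>x. pd \<rho> \<eta>1 x * (a*x - c) \<partial>\<rho>) = a * m - c"
    unfolding eqI using int_pd_x[OF assms(1)] int_pd[OF assms(1)] integral_pd[OF assms(1)]
    by (simp add: m_def ef_mean_eq)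
  define G where "G x = pd \<rho> \<eta>1 x * (exp (a*x - c) - 1 - (a*x - c))" for x
  have Geq: "G = (\<lambda>x. pd \<rho> \<eta>2 x - pd \<rho> \<eta>1 x - pd \<rho> \<eta>1 x * (a*x - c))"
    by (simp add: fun_eq_iff G_def pd2 algebra_simps)
  have intG: "integrable \<rho> G"
    unfolding Geq using int_pd[OF assms(1)] int_pd[OF assms(2)] intI by auto
  have intGv: "(\<integral>x. G x \<partial>\<rho>) = -(a * m - c)"
    unfolding Geq using int_pd[OF assms(1)] int_pd[OF assms(2)] intI integral_pd[OF assms(1)] integral_pd[OF assms(2)] I1
    by simp
  have Gnn: "G x \<ge> 0" for x
  proof -
    have "exp (a*x - c) - 1 - (a*x - c) \<ge> 0" using exp_ge_add_one_self[of "a*x - c"] by linarith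
    then show ?thesis unfolding G_def using pd_pos[of \<eta>1 x] by simp
  qed
  have "(\<integral>x. G x \<partial>\<rho>) \<ge> 0" using Gnn by (intro integral_nonneg_AE) auto
  then show le: "(\<eta>2 - \<eta>1) * ef_mean \<rho> \<eta>1 - lpart \<rho> \<eta>2 + lpart \<rho> \<eta>1 \<le> 0"
    using intGv by (simp add: a_def c_def m_def)
  assume ne: "\<eta>1 \<noteq> \<eta>2"
  show "(\<eta>2 - \<eta>1) * ef_mean \<rho> \<eta>1 - lpart \<rho> \<eta>2 + lpart \<rho> \<eta>1 < 0"
  proof (rule ccontr)
    assume "\<not> ?thesis"
    then have "(\<integral>x. G x \<partial>\<rho>) = 0" using le intGv by (simp add: a_def c_def m_def)
    then have "AE x in \<rho>. G x = 0" using integral_nonneg_eq_0_iff_AE[OF intG] Gnn by auto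
    then have "AE x in \<rho>. x = c / a"
    proof (rule eventually_mono)
      fix x assume "G x = 0"
      then have "exp (a*x - c) = 1 + (a*x - c)" using pd_pos[of \<eta>1 x] by (simp add: G_def)
      then have "a*x - c = 0" using exp_strict[of "a*x - c"] by (cases "a*x - c = 0") auto
      moreover have "a \<noteq> 0" using ne by (simp add: a_def)
      ultimately show "x = c / a" by (simp add: field_simps)
    qed
    then show False using nondeg by blast
  qed
qed

lemma mean_inj: assumes "\<eta>1 \<in> \<Theta>" "\<eta>2 \<in> \<Theta>" "ef_mean \<rho> \<eta>1 = ef_mean \<rho> \<eta>2" shows "\<eta>1 = \<eta>2"
proof (rule ccontr)
  assume ne: "\<eta>1 \<noteq> \<eta>2"
  have "(\<eta>2 - \<eta>1) * ef_mean \<rho> \<eta>1 - lpart \<rho> \<eta>2 + lpart \<rho> \<eta>1 < 0" using gibbs(2)[OF assms(1,2) ne] .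
  moreover have "(\<eta>1 - \<eta>2) * ef_mean \<rho> \<eta>2 - lpart \<rho> \<eta>1 + lpart \<rho> \<eta>2 < 0" using gibbs(2)[OF assms(2,1)] ne by auto
  ultimately show False using assms(3) by (simp add: algebra_simps)
qed

lemma mean_mono: assumes "\<eta>1 \<in> \<Theta>" "\<eta>2 \<in> \<Theta>" "\<eta>1 < \<eta>2" shows "ef_mean \<rho> \<eta>1 < ef_mean \<rho> \<eta>2"
proof -
  have "(\<eta>2 - \<eta>1) * ef_mean \<rho> \<eta>1 - lpart \<rho> \<eta>2 + lpart \<rho> \<eta>1 < 0" using gibbs(2)[OF assms(1,2)] assms(3) by auto
  moreover have "(\<eta>1 - \<eta>2) * ef_mean \<rho> \<eta>2 - lpart \<rho> \<eta>1 + lpart \<rho> \<eta>2 < 0" using gibbs(2)[OF assms(2,1)] assms(3) by auto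
  ultimately have "(\<eta>2 - \<eta>1) * (ef_mean \<rho> \<eta>1 - ef_mean \<rho> \<eta>2) < 0" by (simp add: algebra_simps)
  then show ?thesis using assms(3) by (simp add: mult_less_0_iff)
qed

lemma np_props: assumes "x \<in> mean_set \<rho> \<Theta>"
  shows "nat_param \<rho> \<Theta> x \<in> \<Theta>" "ef_mean \<rho> (nat_param \<rho> \<Theta> x) = x"
proof -
  obtain \<eta> where e: "\<eta> \<in> \<Theta>" "ef_mean \<rho> \<eta> = x" using assms by (auto simp: mean_set_def)
  have "nat_param \<rho> \<Theta> x = \<eta>" unfolding nat_param_def
    by (rule the_equality) (use e mean_inj in auto)
  then show "nat_param \<rho> \<Theta> x \<in> \<Theta>" "ef_mean \<rho> (nat_param \<rho> \<Theta> x) = x" using e by auto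
qed

lemma np_mono: assumes "x \<in> mean_set \<rho> \<Theta>" "y \<in> mean_set \<rho> \<Theta>" "x < y"
  shows "nat_param \<rho> \<Theta> x < nat_param \<rho> \<Theta> y"
proof (rule ccontr)
  assume "\<not> ?thesis"
  then have "nat_param \<rho> \<Theta> y < nat_param \<rho> \<Theta> x \<or> nat_param \<rho> \<Theta> y = nat_param \<rho> \<Theta> x" by auto
  then show False
  proof
    assume "nat_param \<rho> \<Theta> y < nat_param \<rho> \<Theta> x"
    then show False using mean_mono[OF np_props(1)[OF assms(2)] np_props(1)[OF assms(1)]] np_props(2)[OF assms(1)] np_props(2)[OF assms(2)] assms(3) by auto
  next
    assume "nat_param \<rho> \<Theta> y = nat_param \<rho> \<Theta> x"
    then have "ef_mean \<rho> (nat_param \<rho> \<Theta> y) = ef_mean \<rho> (nat_param \<rho> \<Theta> x)" by simp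
    then show False using np_props(2)[OF assms(1)] np_props(2)[OF assms(2)] assms(3) by simp
  qed
qed

lemma np_mono_le: assumes "x \<in> mean_set \<rho> \<Theta>" "y \<in> mean_set \<rho> \<Theta>" "x \<le> y"
  shows "nat_param \<rho> \<Theta> x \<le> nat_param \<rho> \<Theta> y"
  using np_mono[OF assms(1,2)] assms(3) by (cases "x = y") auto

lemma dKL_eq: assumes "x \<in> mean_set \<rho> \<Theta>" "y \<in> mean_set \<rho> \<Theta>"
  shows "dKL \<rho> \<Theta> x y = (nat_param \<rho> \<Theta> x - nat_param \<rho> \<Theta> y) * x
           - lpart \<rho> (nat_param \<rho> \<Theta> x) + lpart \<rho> (nat_param \<rho> \<Theta> y)"
proof -
  define ex where "ex = nat_param \<rho> \<Theta> x"
  define ey where "ey = nat_param \<rho> \<Theta> y"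
  have ex: "ex \<in> \<Theta>" "ef_mean \<rho> ex = x" using np_props[OF assms(1)] by (auto simp: ex_def)
  have ey: "ey \<in> \<Theta>" using np_props[OF assms(2)] by (auto simp: ey_def)
  interpret sigma_finite_measure \<rho> by (rule sf_rho)
  have "dKL \<rho> \<Theta> x y = KL_divergence (exp 1) (density \<rho> (\<lambda>z. ennreal (pd \<rho> ey z))) (density \<rho> (\<lambda>z. ennreal (pd \<rho> ex z)))"
    by (simp add: dKL_def fam_def ef_dist_eq ex_def ey_def)
  also have "\<dots> = (\<integral>z. pd \<rho> ex z * log (exp 1) (pd \<rho> ex z / pd \<rho> ey z) \<partial>\<rho>)"
    by (rule KL_density_density) (auto simp: less_imp_le[OF pd_pos] pd_ne0)
  also have "\<dots> = (\<integral>z. (ex - ey) * (pd \<rho> ex z * z) + (lpart \<rho> ey - lpart \<rho> ex) * pd \<rho> ex z \<partial>\<rho>)"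
  proof (rule Bochner_Integration.integral_cong[OF refl])
    fix z
    have "pd \<rho> ex z / pd \<rho> ey z = exp ((ex - ey) * z - lpart \<rho> ex + lpart \<rho> ey)"
      unfolding pd_def exp_diff[symmetric] by (simp add: algebra_simps)
    then have L: "log (exp 1) (pd \<rho> ex z / pd \<rho> ey z) = (ex - ey) * z - lpart \<rho> ex + lpart \<rho> ey"
      by (simp add: log_def)
    show "pd \<rho> ex z * log (exp 1) (pd \<rho> ex z / pd \<rho> ey z) = (ex - ey) * (pd \<rho> ex z * z) + (lpart \<rho> ey - lpart \<rho> ex) * pd \<rho> ex z"
      unfolding L by (simp add: algebra_simps)
  qed
  also have "\<dots> = (ex - ey) * x + (lpart \<rho> ey - lpart \<rho> ex)"
    using int_pd_x[OF ex(1)] int_pd[OF ex(1)] integral_pd[OF ex(1)] ex(2)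
    by (simp add: ef_mean_eq)
  finally show ?thesis by (simp add: ex_def ey_def)
qed

lemma dKL_nonneg: assumes "x \<in> mean_set \<rho> \<Theta>" "y \<in> mean_set \<rho> \<Theta>" shows "dKL \<rho> \<Theta> x y \<ge> 0"
  using gibbs(1)[OF np_props(1)[OF assms(1)] np_props(1)[OF assms(2)]] np_props(2)[OF assms(1)]
  by (simp add: dKL_eq[OF assms] algebra_simps)

lemma dKL_pos: assumes "x \<in> mean_set \<rho> \<Theta>" "y \<in> mean_set \<rho> \<Theta>" "x \<noteq> y" shows "dKL \<rho> \<Theta> x y > 0"
proof -
  have "nat_param \<rho> \<Theta> x \<noteq> nat_param \<rho> \<Theta> y" using np_props(2)[OF assms(1)] np_props(2)[OF assms(2)] assms(3) by metis
  then show ?thesis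
    using gibbs(2)[OF np_props(1)[OF assms(1)] np_props(1)[OF assms(2)]] np_props(2)[OF assms(1)]
    by (simp add: dKL_eq[OF assms(1,2)] algebra_simps)
qed

lemma dKL_self: assumes "x \<in> mean_set \<rho> \<Theta>" shows "dKL \<rho> \<Theta> x x = 0"
  by (simp add: dKL_eq[OF assms assms])

lemma dext_lower: assumes "l \<in> mean_set \<rho> \<Theta>" "\<eta>' \<in> \<Theta>"
  shows "dext \<rho> \<Theta> x l \<ge> ereal ((\<eta>' - nat_param \<rho> \<Theta> l) * x - lpart \<rho> \<eta>' + lpart \<rho> (nat_param \<rho> \<Theta> l))"
proof (cases "x \<in> mean_set \<rho> \<Theta>")
  case True
  have "(\<eta>' - nat_param \<rho> \<Theta> x) * x - lpart \<rho> \<eta>' + lpart \<rho> (nat_param \<rho> \<Theta> x) \<le> 0"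
    using gibbs(1)[OF np_props(1)[OF True] assms(2)] np_props(2)[OF True] by simp
  then show ?thesis using True by (simp add: dext_def dKL_eq[OF True assms(1)] algebra_simps)
next
  case False
  then show ?thesis unfolding dext_def using assms(2) by (auto intro: SUP_upper2)
qed

lemma dext_nonneg: assumes "l \<in> mean_set \<rho> \<Theta>" shows "dext \<rho> \<Theta> x l \<ge> 0"
  using dext_lower[OF assms np_props(1)[OF assms], of x] by (simp add: zero_ereal_def)

lemma dext_leaf: assumes "\<theta> \<in> mean_set \<rho> \<Theta>" "l \<in> mean_set \<rho> \<Theta>" "\<eta>' \<in> \<Theta>"
    "(nat_param \<rho> \<Theta> \<theta> - nat_param \<rho> \<Theta> l) * (x - \<theta>) \<ge> 0"
  shows "dext \<rho> \<Theta> x l \<ge> ereal ((\<eta>' - nat_param \<rho> \<Theta> \<theta>) * x - lpart \<rho> \<eta>' + lpart \<rho> (nat_param \<rho> \<Theta> \<theta>))"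
proof -
  have "dKL \<rho> \<Theta> \<theta> l \<ge> 0" by (rule dKL_nonneg[OF assms(1,2)])
  then have "(\<eta>' - nat_param \<rho> \<Theta> \<theta>) * x - lpart \<rho> \<eta>' + lpart \<rho> (nat_param \<rho> \<Theta> \<theta>)
      \<le> (\<eta>' - nat_param \<rho> \<Theta> l) * x - lpart \<rho> \<eta>' + lpart \<rho> (nat_param \<rho> \<Theta> l)"
    using assms(4) by (simp add: dKL_eq[OF assms(1,2)] algebra_simps)
  then show ?thesis using dext_lower[OF assms(2,3), of x] by (meson ereal_less_eq(3) order.trans)
qed

end

lemma floor_sqrt_at_top: "filterlim floor_sqrt at_top sequentially"
  unfolding filterlim_at_top
proof
  fix Z :: nat
  show "eventually (\<lambda>n. Z \<le> floor_sqrt n) sequentially"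
    using eventually_ge_at_top[of "Z^2"] by (rule eventually_mono) (simp add: le_floor_sqrtI)
qed

lemma sandwich_sq:
  fixes S :: "nat \<Rightarrow> real"
  assumes mono: "\<And>n. S n \<le> S (Suc n)" and nn: "\<And>n. S n \<ge> 0"
    and conv: "(\<lambda>j. S ((Suc j)^2) / real ((Suc j)^2)) \<longlonglongrightarrow> m"
  shows "(\<lambda>n. S n / real n) \<longlonglongrightarrow> m"
proof -
  define b where "b q = S (q^2) / real (q^2)" for q
  have "(\<lambda>j. b (Suc j)) \<longlonglongrightarrow> m" using conv by (simp add: b_def)
  then have bl: "b \<longlonglongrightarrow> m" by (rule LIMSEQ_imp_Suc)
  have inc: "S a \<le> S c" if "a \<le> c" for a c using mono that by (rule lift_Suc_mono_le)
  define q where "q n = floor_sqrt n" for n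
  have qt: "filterlim q at_top sequentially" unfolding q_def by (rule floor_sqrt_at_top)
  have qt1: "filterlim (\<lambda>n. q n + 1) at_top sequentially"
    by (rule filterlim_compose[OF filterlim_Suc qt, simplified Suc_eq_plus1]) 
  have r1: "(\<lambda>x::nat. real x ^ 2 / (real x + 1)^2) \<longlonglongrightarrow> 1" by real_asymp
  have r2: "(\<lambda>x::nat. (real x + 1) ^ 2 / (real x)^2) \<longlonglongrightarrow> 1" by real_asymp
  have lo: "(\<lambda>n. b (q n) * (real (q n) ^ 2 / (real (q n) + 1)^2)) \<longlonglongrightarrow> m * 1"
    by (intro tendsto_mult filterlim_compose[OF bl qt] filterlim_compose[OF r1 qt])
  have hi: "(\<lambda>n. b (q n + 1) * ((real (q n) + 1) ^ 2 / (real (q n))^2)) \<longlonglongrightarrow> m * 1"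
    by (intro tendsto_mult filterlim_compose[OF bl qt1] filterlim_compose[OF r2 qt])
  have "(\<lambda>n. S n / real n) \<longlonglongrightarrow> m * 1"
  proof (rule tendsto_sandwich[OF _ _ lo hi])
    show "eventually (\<lambda>n. b (q n) * (real (q n) ^ 2 / (real (q n) + 1)^2) \<le> S n / real n) sequentially"
      using eventually_ge_at_top[of "1::nat"]
    proof (rule eventually_mono)
      fix n :: nat assume n: "1 \<le> n"
      have q1: "q n \<ge> 1" using n by (simp add: q_def le_floor_sqrtI)
      have l: "(q n)^2 \<le> n" and u: "n < (q n + 1)^2" unfolding q_def using Suc_floor_sqrt_power2_gt[of n] by auto
      have "b (q n) * (real (q n) ^ 2 / (real (q n) + 1)^2) = S ((q n)^2) / (real (q n) + 1)^2"
        using q1 by (simp add: b_def)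
      also have "\<dots> \<le> S n / (real (q n) + 1)^2" using inc[OF l] by (simp add: divide_right_mono)
      also have "\<dots> \<le> S n / real n"
      proof (rule divide_left_mono)
        have "real n < real ((q n + 1)^2)" using u by linarith
        then show "real n \<le> (real (q n) + 1)^2" by (simp add: add.commute)
      qed (use nn n in auto)
      finally show "b (q n) * (real (q n) ^ 2 / (real (q n) + 1)^2) \<le> S n / real n" .
    qed
    show "eventually (\<lambda>n. S n / real n \<le> b (q n + 1) * ((real (q n) + 1) ^ 2 / (real (q n))^2)) sequentially"
      using eventually_ge_at_top[of "1::nat"]
    proof (rule eventually_mono)
      fix n :: nat assume n: "1 \<le> n"
      have q1: "q n \<ge> 1" using n by (simp add: q_def le_floor_sqrtI)
      have l: "(q n)^2 \<le> n" and u: "n \<le> (q n + 1)^2" unfolding q_def using Suc_floor_sqrt_power2_gt[of n] by auto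
      have "S n / real n \<le> S ((q n + 1)^2) / real n" using inc[OF u] n by (simp add: divide_right_mono)
      also have "\<dots> \<le> S ((q n + 1)^2) / (real (q n))^2"
      proof (rule divide_left_mono)
        have "real ((q n)^2) \<le> real n" using l by linarith
        then show "(real (q n))^2 \<le> real n" by simp
      qed (use nn q1 n in auto)
      also have "\<dots> = b (q n + 1) * ((real (q n) + 1) ^ 2 / (real (q n))^2)"
        using q1 by (simp add: b_def add.commute)
      finally show "S n / real n \<le> b (q n + 1) * ((real (q n) + 1) ^ 2 / (real (q n))^2)" .
    qed
  qed
  then show ?thesis by simp
qed

context prob_space
begin

lemma slln_squares:
  fixes X :: "nat \<Rightarrow> 'a \<Rightarrow> real" and F :: "real measure"
  assumes indep: "indep_vars (\<lambda>_. borel) X UNIV"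
    and dis: "\<And>k. distr M borel (X k) = F"
    and sq: "integrable F (\<lambda>x. x^2)"
  shows "AE \<omega> in M. (\<lambda>j. (\<Sum>k<(Suc j)^2. X k \<omega>) / real ((Suc j)^2)) \<longlonglongrightarrow> (\<integral>x. x \<partial>F)"
proof -
  define m where "m = (\<integral>x. x \<partial>F)"
  have rv[measurable]: "X k \<in> borel_measurable M" for k
    using indep unfolding indep_vars_def by auto
  have int2: "integrable M (\<lambda>\<omega>. (X k \<omega>)^2)" for k
    using sq unfolding dis[of k, symmetric] by (subst (asm) integrable_distr_eq) auto
  have int1: "integrable M (X k)" for k
    using square_integrable_imp_integrable[OF rv int2] .
  have meanX: "expectation (X k) = m" for k
    unfolding m_def dis[of k, symmetric] by (subst integral_distr) auto
  define Y where "Y k \<omega> = X k \<omega> - m" for k \<omega>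
  have rvY[measurable]: "Y k \<in> borel_measurable M" for k unfolding Y_def by simp
  have intY: "integrable M (Y k)" for k unfolding Y_def using int1[of k] by auto
  have intY2: "integrable M (\<lambda>\<omega>. (Y k \<omega>)^2)" for k
    unfolding Y_def power2_diff using int1[of k] int2[of k] by auto
  have meanY: "expectation (Y k) = 0" for k
    unfolding Y_def using int1[of k] meanX[of k] by (simp add: prob_space)
  define v where "v = (\<integral>x. (x - m)^2 \<partial>F)"
  have varY: "expectation (\<lambda>\<omega>. (Y k \<omega>)^2) = v" for k
    unfolding v_def Y_def dis[of k, symmetric] by (subst integral_distr) auto
  have v_nn: "v \<ge> 0" using varY[of 0] by (metis integral_nonneg_AE AE_I2 zero_le_power2)
  have indepY: "indep_vars (\<lambda>_. borel) Y UNIV"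
    unfolding Y_def using indep by (rule indep_vars_compose2[where X=X]) auto
  have cross: "expectation (\<lambda>\<omega>. Y j \<omega> * Y k \<omega>) = 0 \<and> integrable M (\<lambda>\<omega>. Y j \<omega> * Y k \<omega>)" if "j \<noteq> k" for j k
  proof -
    have ind2: "indep_vars (\<lambda>_. borel) Y {j, k}" using indepY by (rule indep_vars_subset) auto
    have eqp: "(\<lambda>\<omega>. \<Prod>i\<in>{j,k}. Y i \<omega>) = (\<lambda>\<omega>. Y j \<omega> * Y k \<omega>)" using that by auto
    have "expectation (\<lambda>\<omega>. \<Prod>i\<in>{j,k}. Y i \<omega>) = (\<Prod>i\<in>{j,k}. expectation (Y i))"
      by (rule indep_vars_lebesgue_integral) (use ind2 intY in auto)
    moreover have "integrable M (\<lambda>\<omega>. \<Prod>i\<in>{j,k}. Y i \<omega>)"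
      by (rule indep_vars_integrable) (use ind2 intY in auto)
    ultimately show ?thesis using that meanY unfolding eqp by simp
  qed
  have EYY: "expectation (\<lambda>\<omega>. Y j \<omega> * Y k \<omega>) = (if j = k then v else 0)" for j k
    using cross[of j k] varY[of j] by (auto simp: power2_eq_square)
  have intYY: "integrable M (\<lambda>\<omega>. Y j \<omega> * Y k \<omega>)" for j k
    using cross[of j k] intY2[of j] by (cases "j = k") (auto simp: power2_eq_square)
  define T where "T n \<omega> = (\<Sum>k<n. Y k \<omega>)" for n \<omega>
  have rvT[measurable]: "T n \<in> borel_measurable M" for n unfolding T_def by simp
  have T2: "(T n \<omega>)^2 = (\<Sum>j<n. \<Sum>k<n. Y j \<omega> * Y k \<omega>)" for n \<omega>
    unfolding T_def power2_eq_square sum_product ..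
  have intT2: "integrable M (\<lambda>\<omega>. (T n \<omega>)^2)" for n
    unfolding T2 using intYY by auto
  have ET2: "expectation (\<lambda>\<omega>. (T n \<omega>)^2) = real n * v" for n
  proof -
    have "expectation (\<lambda>\<omega>. (T n \<omega>)^2) = (\<Sum>j<n. \<Sum>k<n. expectation (\<lambda>\<omega>. Y j \<omega> * Y k \<omega>))"
      unfolding T2 using intYY by (simp add: integral_sum)
    also have "\<dots> = (\<Sum>j<n. v)" unfolding EYY by (simp add: sum.delta)
    finally show ?thesis by simp
  qed
  have Teq: "(\<Sum>k<n. X k \<omega>) / real n - m = T n \<omega> / real n" if "n > 0" for n \<omega>
    using that by (simp add: T_def Y_def sum_subtractf field_simps)
  have bound: "measure M {\<omega>\<in>space M. \<epsilon> \<le> \<bar>(\<Sum>k<n. X k \<omega>) / real n - m\<bar>} \<le> v / (real n * \<epsilon>^2)"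
    if "n > 0" "\<epsilon> > 0" for n \<epsilon>
  proof -
    have "{\<omega>\<in>space M. \<epsilon> \<le> \<bar>(\<Sum>k<n. X k \<omega>) / real n - m\<bar>} = {\<omega>\<in>space M. real n * \<epsilon> \<le> \<bar>T n \<omega>\<bar>}"
    proof -
      have Tn: "T n \<omega> = (\<Sum>k<n. X k \<omega>) - m * real n" for \<omega> by (simp add: T_def Y_def sum_subtractf)
      show ?thesis using that by (auto simp: Tn abs_div field_simps)
    qed
    also have "measure M \<dots> \<le> expectation (\<lambda>\<omega>. (T n \<omega>)^2) / (real n * \<epsilon>)^2"
      by (rule second_moment_method) (use that intT2 in auto)
    also have "\<dots> = v / (real n * \<epsilon>^2)" using that unfolding ET2 by (simp add: power2_eq_square field_simps)
    finally show ?thesis .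
  qed
  have ev: "AE \<omega> in M. eventually (\<lambda>j. \<bar>(\<Sum>k<(Suc j)^2. X k \<omega>) / real ((Suc j)^2) - m\<bar> < \<epsilon>) sequentially"
    if "\<epsilon> > 0" for \<epsilon>
  proof -
    define A where "A j = {\<omega>\<in>space M. \<epsilon> \<le> \<bar>(\<Sum>k<(Suc j)^2. X k \<omega>) / real ((Suc j)^2) - m\<bar>}" for j
    have Am[measurable]: "A j \<in> sets M" for j unfolding A_def by measurable
    have Ab: "measure M (A j) \<le> v / \<epsilon>^2 * inverse (real (Suc j) ^ 2)" for j
      using bound[of "(Suc j)^2" \<epsilon>] that unfolding A_def by (simp add: field_simps)
    have "summable (\<lambda>j. v / \<epsilon>^2 * inverse (real (Suc j) ^ 2))"
    proof (intro summable_mult)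
      have "summable (\<lambda>j. inverse (real j ^ 2))" by (rule inverse_power_summable) simp
      then show "summable (\<lambda>j. inverse (real (Suc j) ^ 2))" by (subst summable_Suc_iff)
    qed
    then have "summable (\<lambda>j. measure M (A j))"
      by (rule summable_comparison_test'[where N=0]) (use Ab in auto)
    then have "AE \<omega> in M. eventually (\<lambda>j. \<omega> \<in> space M - A j) sequentially"
      by (intro borel_cantelli_AE1) (auto simp: emeasure_eq_measure)
    then show ?thesis
      by (rule AE_mp) (auto intro!: AE_I2 elim!: eventually_mono simp: A_def)
  qed
  have "AE \<omega> in M. \<forall>i::nat. eventually (\<lambda>j. \<bar>(\<Sum>k<(Suc j)^2. X k \<omega>) / real ((Suc j)^2) - m\<bar> < 1 / real (Suc i)) sequentially"
    using ev by (subst AE_all_countable) auto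
  then show ?thesis
  proof (rule AE_mp, intro AE_I2 impI)
    fix \<omega> assume H: "\<forall>i::nat. eventually (\<lambda>j. \<bar>(\<Sum>k<(Suc j)^2. X k \<omega>) / real ((Suc j)^2) - m\<bar> < 1 / real (Suc i)) sequentially"
    show "(\<lambda>j. (\<Sum>k<(Suc j)^2. X k \<omega>) / real ((Suc j)^2)) \<longlonglongrightarrow> (\<integral>x. x \<partial>F)"
      unfolding m_def[symmetric]
    proof (rule tendstoI)
      fix r :: real assume "r > 0"
      then obtain i :: nat where i: "1 / real (Suc i) < r"
        using reals_Archimedean by (metis inverse_eq_divide of_nat_Suc)
      show "eventually (\<lambda>j. dist ((\<Sum>k<(Suc j)^2. X k \<omega>) / real ((Suc j)^2)) m < r) sequentially"
        using H[rule_format, of i] by (rule eventually_mono) (use i in \<open>auto simp: dist_real_def\<close>)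
    qed
  qed
qed

lemma slln_nonneg:
  fixes X :: "nat \<Rightarrow> 'a \<Rightarrow> real" and F :: "real measure"
  assumes indep: "indep_vars (\<lambda>_. borel) X UNIV"
    and dis: "\<And>k. distr M borel (X k) = F"
    and sq: "integrable F (\<lambda>x. x^2)"
    and nn: "\<And>k \<omega>. \<omega> \<in> space M \<Longrightarrow> X k \<omega> \<ge> 0"
  shows "AE \<omega> in M. (\<lambda>n. (\<Sum>k<n. X k \<omega>) / real n) \<longlonglongrightarrow> (\<integral>x. x \<partial>F)"
  using slln_squares[OF indep dis sq]
proof (rule AE_mp, intro AE_I2 impI)
  fix \<omega> assume "\<omega> \<in> space M" and c: "(\<lambda>j. (\<Sum>k<(Suc j)^2. X k \<omega>) / real ((Suc j)^2)) \<longlonglongrightarrow> (\<integral>x. x \<partial>F)"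
  show "(\<lambda>n. (\<Sum>k<n. X k \<omega>) / real n) \<longlonglongrightarrow> (\<integral>x. x \<partial>F)"
    by (rule sandwich_sq[OF _ _ c]) (use nn \<open>\<omega> \<in> space M\<close> in \<open>auto intro: sum_nonneg\<close>)
qed

lemma slln:
  fixes X :: "nat \<Rightarrow> 'a \<Rightarrow> real" and F :: "real measure"
  assumes indep: "indep_vars (\<lambda>_. borel) X UNIV"
    and dis: "\<And>k. distr M borel (X k) = F"
    and sq: "integrable F (\<lambda>x. x^2)"
  shows "AE \<omega> in M. (\<lambda>n. (\<Sum>k<n. X k \<omega>) / real n) \<longlonglongrightarrow> (\<integral>x. x \<partial>F)"
proof -
  have rv[measurable]: "X k \<in> borel_measurable M" for k
    using indep unfolding indep_vars_def by auto
  have sF: "sets F = sets borel" using dis[of 0] by auto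
  have mF: "f \<in> borel_measurable borel \<Longrightarrow> f \<in> borel_measurable F" for f :: "real \<Rightarrow> real"
    using measurable_cong_sets[OF sF refl] by blast
  interpret F: prob_space F using dis[of 0] prob_space_distr[OF rv[of 0]] by simp
  have intF: "integrable F (\<lambda>x. x)" by (rule F.square_integrable_imp_integrable[OF mF sq]) simp
  define P where "P k \<omega> = max (X k \<omega>) 0" for k \<omega>
  define N where "N k \<omega> = max (- X k \<omega>) 0" for k \<omega>
  define Fp where "Fp = distr F borel (\<lambda>x. max x 0)"
  define Fn where "Fn = distr F borel (\<lambda>x. max (-x) 0)"
  have indP: "indep_vars (\<lambda>_. borel) P UNIV"
    unfolding P_def using indep by (rule indep_vars_compose2[where X=X and Y="\<lambda>_ x. max x 0"]) auto
  have indN: "indep_vars (\<lambda>_. borel) N UNIV"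
    unfolding N_def using indep by (rule indep_vars_compose2[where X=X and Y="\<lambda>_ x. max (-x) 0"]) auto
  have disP: "distr M borel (P k) = Fp" for k
    unfolding Fp_def dis[of k, symmetric] P_def by (subst distr_distr) (auto simp: comp_def)
  have disN: "distr M borel (N k) = Fn" for k
    unfolding Fn_def dis[of k, symmetric] N_def by (subst distr_distr) (auto simp: comp_def)
  have sqP: "integrable Fp (\<lambda>x. x^2)" unfolding Fp_def
  proof (subst integrable_distr_eq)
    show "integrable F (\<lambda>x. (max x 0)^2)"
      by (rule Bochner_Integration.integrable_bound[OF sq]) (auto intro!: mF simp: max_def)
  qed (auto intro: mF)
  have sqN: "integrable Fn (\<lambda>x. x^2)" unfolding Fn_def
  proof (subst integrable_distr_eq)
    show "integrable F (\<lambda>x. (max (-x) 0)^2)"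
      by (rule Bochner_Integration.integrable_bound[OF sq]) (auto intro!: mF simp: max_def)
  qed (auto intro: mF)
  have intP: "integrable F (\<lambda>x. max x 0)"
    by (rule Bochner_Integration.integrable_bound[OF intF]) (auto intro!: mF simp: max_def)
  have intN: "integrable F (\<lambda>x. max (-x) 0)"
    by (rule Bochner_Integration.integrable_bound[OF intF]) (auto intro!: mF simp: max_def)
  have means: "(\<integral>x. x \<partial>Fp) - (\<integral>x. x \<partial>Fn) = (\<integral>x. x \<partial>F)"
  proof -
    have "(\<integral>x. x \<partial>Fp) - (\<integral>x. x \<partial>Fn) = (\<integral>x. max x 0 \<partial>F) - (\<integral>x. max (-x) 0 \<partial>F)"
      unfolding Fp_def Fn_def by (subst integral_distr, auto intro: mF)+
    also have "\<dots> = (\<integral>x. max x 0 - max (-x) 0 \<partial>F)" using intP intN by simp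
    also have "\<dots> = (\<integral>x. x \<partial>F)" by (intro Bochner_Integration.integral_cong) (auto simp: max_def)
    finally show ?thesis .
  qed
  have "AE \<omega> in M. (\<lambda>n. (\<Sum>k<n. P k \<omega>) / real n) \<longlonglongrightarrow> (\<integral>x. x \<partial>Fp)"
    by (rule slln_nonneg[OF indP disP sqP]) (simp add: P_def)
  moreover have "AE \<omega> in M. (\<lambda>n. (\<Sum>k<n. N k \<omega>) / real n) \<longlonglongrightarrow> (\<integral>x. x \<partial>Fn)"
    by (rule slln_nonneg[OF indN disN sqN]) (simp add: N_def)
  ultimately show ?thesis
  proof (eventually_elim)
    case (elim \<omega>)
    have "(\<lambda>n. (\<Sum>k<n. P k \<omega>) / real n - (\<Sum>k<n. N k \<omega>) / real n) \<longlonglongrightarrow> (\<integral>x. x \<partial>Fp) - (\<integral>x. x \<partial>Fn)"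
      using elim by (intro tendsto_diff)
    moreover have "(\<Sum>k<n. P k \<omega>) / real n - (\<Sum>k<n. N k \<omega>) / real n = (\<Sum>k<n. X k \<omega>) / real n" for n
    proof -
      have "(\<Sum>k<n. P k \<omega>) - (\<Sum>k<n. N k \<omega>) = (\<Sum>k<n. X k \<omega>)"
        unfolding sum_subtractf[symmetric] by (intro sum.cong) (auto simp: P_def N_def max_def)
      then show ?thesis by (simp add: diff_divide_distrib[symmetric])
    qed
    ultimately show ?case using means by simp
  qed
qed

end

lemma ln_lt_minus1: fixes z :: real assumes "z > 0" "z \<noteq> 1" shows "ln z < z - 1"
proof -
  have "1 + (ln z) < exp (ln z)" if "ln z \<noteq> 0"
  proof -
    have "exp (ln z) = exp (ln z)" ..
    show ?thesis
    proof (cases "1 + ln z / 2 \<ge> 0")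
      case True
      have "(1 + ln z/2)^2 \<le> exp (ln z/2) ^ 2" using True by (intro power_mono) auto
      also have "\<dots> = exp (ln z)" by (simp add: power2_eq_square exp_add[symmetric])
      finally have "(1 + ln z/2)^2 \<le> exp (ln z)" .
      moreover have "(ln z)^2 > 0" using that by simp
      then have "1 + ln z < (1 + ln z/2)^2" by (simp add: power2_eq_square field_simps)
      ultimately show ?thesis by simp
    next
      case False
      then show ?thesis using exp_gt_zero[of "ln z"] by linarith
    qed
  qed
  moreover have "ln z \<noteq> 0" using assms by simp
  ultimately show ?thesis using assms by simp
qed

lemma hfun_mono: assumes "1 \<le> a" "a < b" shows "hfun a < hfun b"
proof -
  have "ln (b / a) < b / a - 1" using assms by (intro ln_lt_minus1) auto
  also have "\<dots> = (b - a) / a" using assms by (simp add: field_simps)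
  also have "\<dots> \<le> (b - a) / 1" by (rule divide_left_mono) (use assms in auto)
  finally show ?thesis using assms by (simp add: hfun_def ln_div)
qed

lemma hfun_ge1: assumes "v > 0" shows "hfun v \<ge> 1"
  using ln_le_minus_one[of v] assms by (simp add: hfun_def)

lemma ln_le_half: fixes u :: real assumes "u > 0" shows "ln u \<le> u / 2"
proof -
  have "ln u = 2 * ln (sqrt u)" using assms by (simp add: ln_sqrt)
  also have "\<dots> \<le> 2 * (sqrt u - 1)" using ln_le_minus_one[of "sqrt u"] assms by simp
  also have "\<dots> \<le> u / 2"
  proof -
    have "(sqrt u - 2)^2 \<ge> 0" by simp
    then show ?thesis using assms by (simp add: power2_eq_square algebra_simps)
  qed
  finally show ?thesis .
qed

lemma hinv_props: assumes "y \<ge> 1" shows "hinv y \<ge> 1" "hfun (hinv y) = y"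
proof -
  have "\<exists>x\<ge>1. x \<le> 2*y \<and> hfun x = y"
  proof (rule IVT)
    show "hfun 1 \<le> y" using assms by (simp add: hfun_def)
    show "y \<le> hfun (2*y)"
      using ln_le_minus_one[of y] assms by (simp add: hfun_def ln_mult) (use ln_2_less_1 in linarith)
    show "1 \<le> 2*y" using assms by simp
    show "\<forall>x. 1 \<le> x \<and> x \<le> 2 * y \<longrightarrow> isCont hfun x"
      unfolding hfun_def[abs_def] by (auto intro!: continuous_intros)
  qed
  then obtain x where x: "x \<ge> 1" "hfun x = y" by blast
  have "hinv y = x" unfolding hinv_def
  proof (rule the_equality)
    show "1 \<le> x \<and> hfun x = y" using x by simp
    fix x' assume "1 \<le> x' \<and> hfun x' = y"
    then show "x' = x" using hfun_mono[of x x'] hfun_mono[of x' x] x by (cases x x' rule: linorder_cases) auto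
  qed
  then show "hinv y \<ge> 1" "hfun (hinv y) = y" using x by auto
qed

lemma hinv_le: assumes "y \<ge> 1" shows "hinv y \<le> y + ln (2*y)"
proof -
  define u where "u = hinv y"
  have u: "u \<ge> 1" "u - ln u = y" using hinv_props[OF assms] by (auto simp: u_def hfun_def)
  have "u \<le> 2*y" using ln_le_half[of u] u by simp
  then have "ln u \<le> ln (2*y)" using u by simp
  then show ?thesis using u by (simp add: u_def)
qed

lemma ln_15: "1/3 \<le> ln (3/2::real)" "ln (3/2::real) \<le> 1"
proof -
  have "ln (2/3::real) \<le> 2/3 - 1" by (rule ln_le_minus_one) simp
  moreover have "ln (3/2::real) = - ln (2/3)" by (simp add: ln_div)
  ultimately show "1/3 \<le> ln (3/2::real)" by simp
  show "ln (3/2::real) \<le> 1" using ln_le_minus_one[of "3/2"] by simp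
qed

lemma exp_small: fixes a :: real assumes "0 \<le> a" "a \<le> 1" shows "exp a \<le> 1 + 3 * a"
proof -
  have "1 - a \<le> exp (-a)" using exp_ge_add_one_self[of "-a"] by simp
  then have "(1 - a) * exp a \<le> exp (-a) * exp a" by (intro mult_right_mono) auto
  then have "exp a - a * exp a \<le> 1" by (simp add: exp_minus field_simps)
  moreover have "exp a \<le> 3" using exp_le exp_mono[OF assms(2)] by linarith
  then have "a * exp a \<le> a * 3" using assms by (intro mult_left_mono) auto
  then have "a * exp a \<le> 3 * a" by simp
  ultimately show ?thesis by linarith
qed

lemma htilde_le: assumes "z \<ge> 1/2" shows "htilde z \<le> z + ln (2*z) + 11"
proof (cases "z \<ge> hfun (1 / ln (3/2))")
  case True
  have "hfun (1 / ln (3/2)) \<ge> 1" using ln_15 by (intro hfun_ge1) simp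
  then have z1: "z \<ge> 1" using True by simp
  define w where "w = hinv z"
  have w: "w \<ge> 1" "w \<le> z + ln (2*z)" using hinv_props[OF z1] hinv_le[OF z1] by (auto simp: w_def)
  have "exp (1/w) \<le> 1 + 3 * (1/w)" using w by (intro exp_small) auto
  then have "exp (1/w) * w \<le> (1 + 3 * (1/w)) * w" using w by (intro mult_right_mono) auto
  also have "\<dots> = w + 3" using w by (simp add: field_simps)
  finally have "htilde z \<le> w + 3" using True by (simp add: htilde_def w_def)
  then show ?thesis using w by simp
next
  case False
  have l: "1/3 \<le> ln (3/2::real)" "ln (3/2::real) \<le> 1" by (rule ln_15)+
  have v1: "1 / ln (3/2::real) \<ge> 1" using l by simp
  have v3: "1 / ln (3/2::real) \<le> 3" using l by (simp add: field_simps)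
  have "hfun (1 / ln (3/2)) \<le> 1 / ln (3/2)" using v1 by (simp add: hfun_def)
  then have zl: "z \<le> 3" using False v3 by simp
  have "- ln (ln (3/2::real)) = ln (1 / ln (3/2))" using l by (simp add: ln_div)
  also have "\<dots> \<le> 1 / ln (3/2) - 1" using v1 by (intro ln_le_minus_one) simp
  finally have "- ln (ln (3/2::real)) \<le> 2" using v3 by simp
  then have "htilde z \<le> 15/2" using False zl by (simp add: htilde_def)
  moreover have "ln (2*z) \<ge> 0" by (rule ln_ge_zero) (use assms in simp)
  ultimately show ?thesis using assms by linarith
qed

definition Gb :: "real \<Rightarrow> real" where
  "Gb x = 28 + x + ln (2 + 2*x) + 2 * ln (6 + x + ln (2 + 2*x))"

lemma Cexp_le: assumes "x \<ge> 0" shows "Cexp x \<le> Gb x"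
proof -
  define u where "u = hinv (1 + x)"
  have u: "u \<ge> 1" "u \<le> 1 + x + ln (2 + 2*x)" using hinv_props[of "1+x"] hinv_le[of "1+x"] assms
    by (auto simp: u_def algebra_simps)
  define c where "c = ln (pi^2 / 3)"
  have "pi * pi \<ge> 3 * 3" using pi_gt3 by (intro mult_mono) auto
  then have "pi^2 / 3 \<ge> 1" by (simp add: power2_eq_square)
  then have c0: "c \<ge> 0" by (simp add: c_def)
  have "pi * pi \<le> 4 * 4" using pi_less_4 pi_gt_zero by (intro mult_mono) auto
  then have "pi^2 \<le> 16" by (simp add: power2_eq_square)
  then have "pi^2 / 3 \<le> 6" by simp
  moreover have "ln (pi^2/3) \<le> pi^2/3 - 1" by (rule ln_le_minus_one) simp
  ultimately have "c \<le> 5" unfolding c_def by linarith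
  note c = c0 this
  define z where "z = (u + c) / 2"
  have z: "z \<ge> 1/2" using u c by (simp add: z_def)
  have "Cexp x = 2 * htilde z" by (simp add: Cexp_def z_def u_def c_def)
  also have "\<dots> \<le> 2 * (z + ln (2*z) + 11)" using htilde_le[OF z] by simp
  also have "\<dots> = u + c + 2 * ln (u + c) + 22"
  proof -
    have e1: "2*z = u + c" by (simp add: z_def)
    then have e2: "ln (2*z) = ln (u + c)" by simp
    show ?thesis unfolding e2 distrib_left e1 by simp
  qed
  also have "\<dots> \<le> (1 + x + ln (2 + 2*x)) + 5 + 2 * ln (6 + x + ln (2 + 2*x)) + 22"
  proof -
    have "ln (u + c) \<le> ln (6 + x + ln (2 + 2*x))" using u c by simp
    then show ?thesis using u c by linarith
  qed
  finally show ?thesis by (simp add: Gb_def)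
qed

lemma Cexp_ev: assumes "\<epsilon> > 0" shows "eventually (\<lambda>x. Cexp x \<le> (1 + \<epsilon>) * x) at_top"
proof -
  have "((\<lambda>x::real. (28 + ln (2 + 2*x) + 2 * ln (6 + x + ln (2 + 2*x))) / x) \<longlongrightarrow> 0) at_top"
    by real_asymp
  then have "eventually (\<lambda>x. (28 + ln (2 + 2*x) + 2 * ln (6 + x + ln (2 + 2*x))) / x < \<epsilon>) at_top"
    using assms by (rule order_tendstoD)
  moreover have "eventually (\<lambda>x::real. x > 0) at_top" by (rule eventually_gt_at_top)
  ultimately show ?thesis
  proof eventually_elim
    case (elim x)
    then have "28 + ln (2 + 2*x) + 2 * ln (6 + x + ln (2 + 2*x)) < \<epsilon> * x" by (simp add: field_simps)
    then have "Gb x \<le> (1 + \<epsilon>) * x" by (simp add: Gb_def algebra_simps)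
    then show ?case using Cexp_le[of x] elim by simp
  qed
qed

lemma Ncnt_le: "Ncnt I l t \<omega> \<le> t"
proof -
  have "Ncnt I l t \<omega> \<le> card {1..t}" unfolding Ncnt_def by (intro card_mono) auto
  then show ?thesis by simp
qed

lemma aval_alt: "aval T \<theta> lam \<noteq> win \<Longrightarrow> altv win \<theta> (Vval T lam)"
  by (cases win) (auto simp: aval_def altv_def)

lemma core:
  fixes \<rho> :: "real measure" and \<Theta> :: "real set" and \<theta> :: real
    and T :: "'l mmtree" and \<mu> :: "'l \<Rightarrow> real" and w :: "'l \<Rightarrow> real"
    and Y :: "'l \<Rightarrow> nat \<Rightarrow> 'w \<Rightarrow> real" and I :: "nat \<Rightarrow> 'w \<Rightarrow> 'l" and \<omega> :: 'w
  assumes fam: "exp_family \<rho> \<Theta>"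
    and theta: "\<theta> \<in> mean_set \<rho> \<Theta>"
    and mu: "\<forall>l\<in>set (leaves T). \<mu> l \<in> mean_set \<rho> \<Theta>"
    and weights: "is_w (dKL \<rho> \<Theta>) \<theta> win \<mu> T w"
    and Dpos: "dval (dKL \<rho> \<Theta>) \<theta> win \<mu> T > 0"
    and cv: "\<forall>l\<in>set (leaves T). (\<lambda>t. real (Ncnt I l t \<omega>) / real t) \<longlonglongrightarrow> w l"
    and sl: "\<forall>l\<in>set (leaves T). (\<lambda>n. (\<Sum>k<n. Y l k \<omega>) / real n) \<longlonglongrightarrow> \<mu> l"
    and c: "0 < c" "c < dval (dKL \<rho> \<Theta>) \<theta> win \<mu> T"
  shows "eventually (\<lambda>t. Zstat \<rho> \<Theta> \<theta> T I Y t \<omega> \<ge> ereal (real t * c)) sequentially"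
proof -
  define D where "D = dval (dKL \<rho> \<Theta>) \<theta> win \<mu> T"
  define L where "L = set (leaves T)"
  define S where "S = {l. w l > 0}"
  define np where "np = nat_param \<rho> \<Theta>"
  define b where "b = lpart \<rho>"
  define N where "N l t = Ncnt I l t \<omega>" for l t
  define mh where "mh t = muhat I Y t \<omega>" for t
  define f where "f l x = (np (\<mu> l) - np \<theta>) * x - b (np (\<mu> l)) + b (np \<theta>)" for l x
  have finL: "finite L" by (simp add: L_def)
  have wprops: "\<forall>x. w x \<ge> 0" "\<forall>x. x \<notin> L \<longrightarrow> w x = 0" using is_w_props[OF weights] by (auto simp: L_def)
  have SL: "S \<subseteq> L" using wprops S_def by force
  have finS: "finite S" using finite_subset[OF SL finL] .
  have leafpos: "dval (dKL \<rho> \<Theta>) \<theta> win \<mu> (Leaf l) > 0" if "l \<in> S" for l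
    using is_w_leafpos[OF weights Dpos] that by (auto simp: S_def)
  have side: "(win \<and> \<mu> l > \<theta>) \<or> (\<not> win \<and> \<mu> l < \<theta>)" if "l \<in> S" for l
  proof -
    have lL: "l \<in> L" using that SL by auto
    have "\<mu> l \<noteq> \<theta> \<or> \<not> (win \<and> \<theta> \<le> \<mu> l)" 
      using leafpos[OF that] dKL_self[OF fam theta] by auto
    then show ?thesis using leafpos[OF that] by (auto split: if_splits)
  qed
  have dleaf: "dval (dKL \<rho> \<Theta>) \<theta> win \<mu> (Leaf l) = dKL \<rho> \<Theta> (\<mu> l) \<theta>" if "l \<in> S" for l
    using side[OF that] by auto
  have fmu: "f l (\<mu> l) = dKL \<rho> \<Theta> (\<mu> l) \<theta>" if "l \<in> L" for l
    using dKL_eq[OF fam _ theta, of "\<mu> l"] mu that by (simp add: f_def np_def b_def L_def)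
  have Nlim: "filterlim (N l) at_top sequentially" if "l \<in> S" for l
  proof -
    have wl: "w l > 0" using that by (simp add: S_def)
    have "eventually (\<lambda>t. real (N l t) / real t > w l / 2) sequentially"
      using cv that SL wl by (intro order_tendstoD) (auto simp: N_def L_def)
    show ?thesis unfolding filterlim_at_top
    proof
      fix Z :: nat
      obtain t0 :: nat where t0: "real t0 \<ge> 2 * real Z / w l" using real_arch_simple by blast
      have "eventually (\<lambda>t. t \<ge> Suc t0) sequentially" by (rule eventually_ge_at_top)
      with \<open>eventually (\<lambda>t. real (N l t) / real t > w l / 2) sequentially\<close>
      show "eventually (\<lambda>t. Z \<le> N l t) sequentially"
      proof eventually_elim
        case (elim t)
        then have tp: "real t > 0" by simp
        have "real (N l t) > w l / 2 * real t" using elim tp by (simp add: field_simps)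
        moreover have "w l / 2 * real t \<ge> w l / 2 * (2 * real Z / w l)"
          using elim t0 wl by (intro mult_left_mono) auto
        ultimately have "real (N l t) > real Z" using wl by simp
        then show ?case by simp
      qed
    qed
  qed
  have mhlim: "(\<lambda>t. mh t l) \<longlonglongrightarrow> \<mu> l" if "l \<in> S" for l
  proof -
    have "(\<lambda>t. (\<Sum>k<N l t. Y l k \<omega>) / real (N l t)) \<longlonglongrightarrow> \<mu> l"
      by (rule filterlim_compose[OF _ Nlim[OF that]]) (use sl that SL in \<open>auto simp: L_def\<close>)
    then show ?thesis by (simp add: mh_def muhat_def N_def)
  qed
  define \<epsilon> where "\<epsilon> = (D - c) / (1 + D)"
  have Dp: "D > 0" using Dpos by (simp add: D_def)
  have eps: "\<epsilon> > 0" "\<epsilon> < 1" using c Dp by (auto simp: \<epsilon>_def D_def field_simps)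
  have epsc: "(1 - \<epsilon>) * (D - \<epsilon>) \<ge> c"
  proof -
    have "(1 - \<epsilon>) * (D - \<epsilon>) = D - \<epsilon> * (1 + D) + \<epsilon>^2" by (simp add: algebra_simps power2_eq_square)
    also have "\<epsilon> * (1 + D) = D - c" using Dp by (simp add: \<epsilon>_def)
    finally show ?thesis by simp
  qed
  have evS: "eventually (\<lambda>t. \<forall>l\<in>S. real (N l t) / real t \<ge> (1 - \<epsilon>) * w l
      \<and> (if win then mh t l > \<theta> else mh t l < \<theta>) \<and> f l (mh t l) \<ge> dKL \<rho> \<Theta> (\<mu> l) \<theta> - \<epsilon>) sequentially"
  proof (rule eventually_ball_finite[OF finS], intro ballI eventually_conj)
    fix l assume lS: "l \<in> S"
    have wl: "w l > 0" using lS by (simp add: S_def)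
    have lL: "l \<in> L" using lS SL by auto
    have "(1 - \<epsilon>) * w l < w l" using eps wl by simp
    then have "eventually (\<lambda>t. real (N l t) / real t > (1 - \<epsilon>) * w l) sequentially"
      using cv lL by (intro order_tendstoD) (auto simp: N_def L_def)
    then show "eventually (\<lambda>t. real (N l t) / real t \<ge> (1 - \<epsilon>) * w l) sequentially"
      by (rule eventually_mono) simp
    show "eventually (\<lambda>t. if win then mh t l > \<theta> else mh t l < \<theta>) sequentially"
    proof (cases win)
      case True
      then have "\<mu> l > \<theta>" using side[OF lS] by auto
      then show ?thesis using True order_tendstoD(1)[OF mhlim[OF lS]] by simp
    next
      case False
      then have "\<mu> l < \<theta>" using side[OF lS] by auto
      then show ?thesis using False order_tendstoD(2)[OF mhlim[OF lS]] by simp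
    qed
    have "(\<lambda>t. f l (mh t l)) \<longlonglongrightarrow> f l (\<mu> l)"
      unfolding f_def by (intro tendsto_intros mhlim[OF lS])
    then have "eventually (\<lambda>t. f l (mh t l) > f l (\<mu> l) - \<epsilon>) sequentially"
      using eps by (intro order_tendstoD) auto
    then show "eventually (\<lambda>t. f l (mh t l) \<ge> dKL \<rho> \<Theta> (\<mu> l) \<theta> - \<epsilon>) sequentially"
      by (rule eventually_mono) (use fmu[OF lL] in auto)
  qed
  show ?thesis using evS eventually_ge_at_top[of "1::nat"]
  proof eventually_elim
    case (elim t)
    have tp: "real t \<ge> 1" using elim by simp
    have ans: "aval T \<theta> (mh t) = win"
    proof (rule ccontr)
      assume "aval T \<theta> (mh t) \<noteq> win"
      then have "altv win \<theta> (Vval T (mh t))" by (rule aval_alt)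
      then obtain l where l: "w l > 0" "altv win \<theta> (mh t l)" using is_w_alt[OF weights Dpos] by blast
      then have "l \<in> S" by (simp add: S_def)
      then show False using elim l(2) by (cases win) (auto simp: altv_def)
    qed
    show ?case unfolding Zstat_def
    proof (rule INF_greatest)
      fix lam assume "lam \<in> {lam. (\<forall>l\<in>set (leaves T). lam l \<in> mean_set \<rho> \<Theta>) \<and> aval T \<theta> lam \<noteq> aval T \<theta> (muhat I Y t \<omega>)}"
      then have lamX: "\<forall>l\<in>L. lam l \<in> mean_set \<rho> \<Theta>" and lamA: "aval T \<theta> lam \<noteq> win"
        using ans by (auto simp: L_def mh_def)
      have altT: "altv win \<theta> (Vval T lam)" using lamA by (rule aval_alt)
      define e where "e l = (if w l > 0 \<and> altv win \<theta> (lam l) then max 0 (f l (mh t l)) else 0)" for l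
      have trm: "ereal (real (N l t)) * dext \<rho> \<Theta> (mh t l) (lam l) \<ge> ereal (real t * (1 - \<epsilon>) * w l * e l)"
        if lL: "l \<in> L" for l
      proof -
        have dnn: "dext \<rho> \<Theta> (mh t l) (lam l) \<ge> 0" using dext_nonneg[OF fam] lamX lL by blast
        show ?thesis
        proof (cases "w l > 0 \<and> altv win \<theta> (lam l)")
          case False
          then have "e l = 0" unfolding e_def by auto
          then show ?thesis using dnn by (simp add: zero_ereal_def[symmetric] ereal_zero_le_0_iff)
        next
          case True
          then have lS: "l \<in> S" by (simp add: S_def)
          have H: "real (N l t) / real t \<ge> (1 - \<epsilon>) * w l" "if win then mh t l > \<theta> else mh t l < \<theta>"
              "f l (mh t l) \<ge> dKL \<rho> \<Theta> (\<mu> l) \<theta> - \<epsilon>" using elim lS by auto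
          have Nb: "real t * (1 - \<epsilon>) * w l \<le> real (N l t)" using H(1) tp by (simp add: field_simps)
          have Nb0: "0 \<le> real t * (1 - \<epsilon>) * w l" using eps wprops by simp
          have muX: "\<mu> l \<in> mean_set \<rho> \<Theta>" using mu lL by (auto simp: L_def)
          have prodc: "(np \<theta> - np (lam l)) * (mh t l - \<theta>) \<ge> 0"
          proof (cases win)
            case w: True
            then have "lam l < \<theta>" using True by (simp add: altv_def)
            then have "np (lam l) \<le> np \<theta>" unfolding np_def
              using np_mono_le[OF fam lamX[rule_format, OF lL] theta] by simp
            moreover have "mh t l > \<theta>" using H(2) w by simp
            ultimately show ?thesis by simp
          next
            case w: False
            then have "\<theta> \<le> lam l" using True by (simp add: altv_def)
            then have "np \<theta> \<le> np (lam l)" unfolding np_def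
              using np_mono_le[OF fam theta lamX[rule_format, OF lL]] by simp
            moreover have "mh t l < \<theta>" using H(2) w by simp
            ultimately show ?thesis by (simp add: mult_nonpos_nonpos)
          qed
          have "dext \<rho> \<Theta> (mh t l) (lam l) \<ge> ereal (f l (mh t l))"
            using dext_leaf[OF fam theta lamX[rule_format, OF lL] np_props(1)[OF fam muX], of "mh t l"] prodc
            by (simp add: f_def np_def b_def)
          then have "dext \<rho> \<Theta> (mh t l) (lam l) \<ge> ereal (e l)" using dnn True
            by (simp add: e_def max_def zero_ereal_def[symmetric])
          then have "ereal (real t * (1 - \<epsilon>) * w l) * ereal (e l) \<le> ereal (real (N l t)) * dext \<rho> \<Theta> (mh t l) (lam l)"
            using Nb Nb0 by (intro ereal_mult_mono) (auto simp: e_def)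
          then show ?thesis by simp
        qed
      qed
      have lower: "(\<Sum>l\<in>L. w l * e l) \<ge> D - \<epsilon>"
        unfolding D_def
      proof (rule is_w_lower[OF weights Dpos altT finL])
        show "set (leaves T) \<subseteq> L" by (simp add: L_def)
        show "\<forall>l\<in>L. 0 \<le> e l" by (simp add: e_def)
        show "0 \<le> \<epsilon>" using eps by simp
        show "\<forall>l. 0 < w l \<longrightarrow> altv win \<theta> (lam l) \<longrightarrow> dval (dKL \<rho> \<Theta>) \<theta> win \<mu> (Leaf l) - \<epsilon> \<le> e l"
        proof (intro allI impI)
          fix l assume "0 < w l" "altv win \<theta> (lam l)"
          then have lS: "l \<in> S" by (simp add: S_def)
          then have "f l (mh t l) \<ge> dKL \<rho> \<Theta> (\<mu> l) \<theta> - \<epsilon>" using elim by auto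
          then show "dval (dKL \<rho> \<Theta>) \<theta> win \<mu> (Leaf l) - \<epsilon> \<le> e l"
            using dleaf[OF lS] \<open>0 < w l\<close> \<open>altv win \<theta> (lam l)\<close> by (simp add: e_def)
        qed
      qed
      have "ereal (real t * c) \<le> ereal (real t * ((1 - \<epsilon>) * (D - \<epsilon>)))"
        using epsc tp by (simp add: mult_left_mono)
      also have "\<dots> \<le> ereal (real t * (1 - \<epsilon>) * (\<Sum>l\<in>L. w l * e l))"
        using lower eps tp by (simp add: mult_left_mono mult.assoc)
      also have "\<dots> = (\<Sum>l\<in>L. ereal (real t * (1 - \<epsilon>) * w l * e l))"
        by (simp add: sum_distrib_left mult.assoc)
      also have "\<dots> \<le> (\<Sum>l\<in>L. ereal (real (N l t)) * dext \<rho> \<Theta> (mh t l) (lam l))"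
        by (rule sum_mono) (rule trm)
      finally show "ereal (real t * c) \<le> (\<Sum>l\<in>set (leaves T). ereal (real (Ncnt I l t \<omega>)) * dext \<rho> \<Theta> (muhat I Y t \<omega> l) (lam l))"
        by (simp add: L_def N_def mh_def)
    qed
  qed
qed

lemma key_tau:
  fixes Z :: "nat \<Rightarrow> ereal" and \<beta> :: "nat \<Rightarrow> real \<Rightarrow> real" and \<tau> :: "real \<Rightarrow> enat" and B :: "real \<Rightarrow> real"
  assumes Zev: "\<And>c. 0 < c \<Longrightarrow> c < D \<Longrightarrow> eventually (\<lambda>t. Z t \<ge> ereal (real t * c)) sequentially"
    and bl: "\<And>t \<delta>. t \<ge> 1 \<Longrightarrow> \<beta> t \<delta> \<le> A * ln (1 + ln (real t)) + B \<delta>"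
    and A: "A \<ge> 0"
    and tau: "\<And>\<delta>. \<tau> \<delta> = (if \<exists>t. Z t \<ge> ereal (\<beta> t \<delta>) then enat (LEAST t. Z t \<ge> ereal (\<beta> t \<delta>)) else \<infinity>)"
    and a: "0 < a" "a < D"
  shows "\<exists>T1. \<forall>\<delta>. \<tau> \<delta> \<le> enat (max T1 (nat \<lceil>B \<delta> / a\<rceil>))"
proof -
  define c where "c = (a + D) / 2"
  define \<gamma> where "\<gamma> = c - a"
  have c: "0 < c" "c < D" "\<gamma> > 0" using a by (auto simp: c_def \<gamma>_def)
  have lim: "(\<lambda>t::nat. ln (1 + ln (real t)) / real t) \<longlonglongrightarrow> 0" by real_asymp
  have "eventually (\<lambda>t. ln (1 + ln (real t)) / real t < \<gamma> / (A + 1)) sequentially"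
    using c A by (intro order_tendstoD(2)[OF lim]) auto
  moreover have "eventually (\<lambda>t. Z t \<ge> ereal (real t * c)) sequentially" using Zev c by blast
  moreover have "eventually (\<lambda>t::nat. t \<ge> 1) sequentially" by (rule eventually_ge_at_top)
  ultimately have "eventually (\<lambda>t. ln (1 + ln (real t)) / real t < \<gamma> / (A + 1) \<and> Z t \<ge> ereal (real t * c) \<and> t \<ge> 1) sequentially"
    by eventually_elim auto
  then obtain T1 where T1: "\<And>t. t \<ge> T1 \<Longrightarrow> ln (1 + ln (real t)) / real t < \<gamma> / (A + 1) \<and> Z t \<ge> ereal (real t * c) \<and> t \<ge> 1"
    unfolding eventually_sequentially by blast
  show ?thesis
  proof (intro exI allI)
    fix \<delta>
    define t where "t = max T1 (nat \<lceil>B \<delta> / a\<rceil>)"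
    have H: "ln (1 + ln (real t)) / real t < \<gamma> / (A + 1)" "Z t \<ge> ereal (real t * c)" "t \<ge> 1"
      using T1[of t] by (auto simp: t_def)
    have tp: "real t > 0" using H(3) by simp
    have lnn: "ln (1 + ln (real t)) \<ge> 0" using H(3) by simp
    have "ln (1 + ln (real t)) < \<gamma> / (A + 1) * real t" using H(1) tp by (simp add: field_simps)
    then have "A * ln (1 + ln (real t)) \<le> \<gamma> * real t"
    proof -
      have "A * ln (1 + ln (real t)) \<le> (A + 1) * ln (1 + ln (real t))" using lnn by (simp add: algebra_simps)
      also have "\<dots> \<le> (A + 1) * (\<gamma> / (A + 1) * real t)"
        using \<open>ln (1 + ln (real t)) < \<gamma> / (A + 1) * real t\<close> A by (intro mult_left_mono) auto
      also have "\<dots> = \<gamma> * real t" using A by simp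
      finally show ?thesis .
    qed
    moreover have "B \<delta> \<le> a * real t"
    proof -
      have "B \<delta> / a \<le> real (nat \<lceil>B \<delta> / a\<rceil>)" by (rule real_nat_ceiling_ge)
      also have "\<dots> \<le> real t" by (simp add: t_def)
      finally show ?thesis using a by (simp add: field_simps)
    qed
    ultimately have "\<beta> t \<delta> \<le> real t * c" using bl[OF H(3), of \<delta>] by (simp add: \<gamma>_def algebra_simps)
    then have "ereal (\<beta> t \<delta>) \<le> ereal (real t * c)" by simp
    then have Zt: "Z t \<ge> ereal (\<beta> t \<delta>)" using H(2) by (rule order.trans)
    then have ex: "\<exists>t. Z t \<ge> ereal (\<beta> t \<delta>)" by blast
    have "(LEAST t. Z t \<ge> ereal (\<beta> t \<delta>)) \<le> t" by (rule Least_le) (rule Zt)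
    then show "\<tau> \<delta> \<le> enat t" using ex by (simp add: tau)
  qed
qed

lemma finish:
  fixes Z :: "nat \<Rightarrow> ereal" and \<beta> :: "nat \<Rightarrow> real \<Rightarrow> real" and \<tau> :: "real \<Rightarrow> enat" and B :: "real \<Rightarrow> real"
  assumes Zev: "\<And>c. 0 < c \<Longrightarrow> c < D \<Longrightarrow> eventually (\<lambda>t. Z t \<ge> ereal (real t * c)) sequentially"
    and Dpos: "D > 0"
    and bl: "\<And>t \<delta>. t \<ge> 1 \<Longrightarrow> \<beta> t \<delta> \<le> A * ln (1 + ln (real t)) + B \<delta>"
    and A: "A \<ge> 0"
    and Bev: "\<And>\<epsilon>. \<epsilon> > 0 \<Longrightarrow> \<exists>x0. \<forall>\<delta>. 0 < \<delta> \<longrightarrow> \<delta> < 1 \<longrightarrow> ln (1/\<delta>) \<ge> x0 \<longrightarrow> B \<delta> \<le> (1 + \<epsilon>) * ln (1/\<delta>)"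
    and tau: "\<And>\<delta>. \<tau> \<delta> = (if \<exists>t. Z t \<ge> ereal (\<beta> t \<delta>) then enat (LEAST t. Z t \<ge> ereal (\<beta> t \<delta>)) else \<infinity>)"
  shows "(\<forall>\<delta>. \<tau> \<delta> < \<infinity>) \<and> Limsup (at_right 0) (\<lambda>\<delta>. ereal_of_enat (\<tau> \<delta>) / ereal (ln (1 / \<delta>))) \<le> ereal (1 / D)"
proof
  obtain T1 where "\<forall>\<delta>. \<tau> \<delta> \<le> enat (max T1 (nat \<lceil>B \<delta> / (D/2)\<rceil>))"
    using key_tau[where Z=Z and \<beta>=\<beta> and \<tau>=\<tau> and B=B and D=D and A=A and a="D/2", OF Zev bl A tau] Dpos by auto
  then show "\<forall>\<delta>. \<tau> \<delta> < \<infinity>" using enat_ord_simps(4) order.strict_trans1 by blast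
next
  show "Limsup (at_right 0) (\<lambda>\<delta>. ereal_of_enat (\<tau> \<delta>) / ereal (ln (1 / \<delta>))) \<le> ereal (1 / D)"
  proof (rule ereal_le_epsilon2)
    fix e :: real assume e: "e > 0"
    define r where "r = 1 / D + e"
    have r1: "r > 1 / D" using e by (simp add: r_def)
    have "1 / D > 0" using Dpos by simp
    then have r: "r > 1 / D" "r > 0" using r1 by linarith+
    have rD: "1 / r < D" using r Dpos by (simp add: field_simps)
    define ri where "ri = 1 / r"
    have ir: "ri > 0" "ri < D" using r rD by (auto simp: ri_def)
    define a where "a = (ri + D) / 2"
    have a1: "0 < a" unfolding a_def using ir by simp
    have a2: "a < D" unfolding a_def using ir by simp
    have a3: "ri < a" unfolding a_def using ir by simp
    note a = a1 a2 a3[unfolded ri_def]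
    have ra: "r * a > 1" using a r by (simp add: field_simps)
    define \<epsilon> where "\<epsilon> = (r * a - 1) / 2"
    have eps: "\<epsilon> > 0" using ra by (simp add: \<epsilon>_def)
    have q: "(1 + \<epsilon>) / a < r" using ra a by (simp add: \<epsilon>_def field_simps)
    obtain x0 where x0: "\<And>\<delta>. 0 < \<delta> \<Longrightarrow> \<delta> < 1 \<Longrightarrow> ln (1/\<delta>) \<ge> x0 \<Longrightarrow> B \<delta> \<le> (1 + \<epsilon>) * ln (1/\<delta>)"
      using Bev[OF eps] by blast
    obtain T1 where T1: "\<And>\<delta>. \<tau> \<delta> \<le> enat (max T1 (nat \<lceil>B \<delta> / a\<rceil>))"
      using key_tau[where Z=Z and \<beta>=\<beta> and \<tau>=\<tau> and B=B and D=D and A=A and a=a, OF Zev bl A tau a(1,2)] by blast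
    define M where "M = max (max x0 1) ((real T1 + 1) / (r - (1 + \<epsilon>) / a))"
    have M: "M \<ge> x0" "M \<ge> 1" "M \<ge> (real T1 + 1) / (r - (1 + \<epsilon>) / a)" by (auto simp: M_def)
    have "eventually (\<lambda>\<delta>. ereal_of_enat (\<tau> \<delta>) / ereal (ln (1 / \<delta>)) \<le> ereal r) (at_right (0::real))"
      unfolding eventually_at_right_field
    proof (intro exI conjI allI impI)
      show "0 < min 1 (exp (- M))" by simp
      fix \<delta> :: real assume d: "0 < \<delta>" "\<delta> < min 1 (exp (- M))"
      have d1: "\<delta> < 1" using d by simp
      have "ln \<delta> < ln (exp (- M))" using d by (subst ln_less_cancel_iff) auto
      then have "ln \<delta> < - M" by simp
      then have LM: "ln (1/\<delta>) > M" using d by (simp add: ln_div)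
      define Lg where "Lg = ln (1/\<delta>)"
      have Lp: "Lg > 0" using LM M by (simp add: Lg_def)
      have Bb: "B \<delta> \<le> (1 + \<epsilon>) * Lg" using x0[OF d(1) d1] LM M by (simp add: Lg_def)
      define n where "n = max T1 (nat \<lceil>B \<delta> / a\<rceil>)"
      obtain k where k: "\<tau> \<delta> = enat k" "k \<le> n" using T1[of \<delta>] unfolding n_def
        by (cases "\<tau> \<delta>") auto
      have "real (nat \<lceil>B \<delta> / a\<rceil>) \<le> max 0 (B \<delta> / a) + 1" by linarith
      also have "\<dots> \<le> (1 + \<epsilon>) * Lg / a + 1"
        using Bb a Lp eps by (auto simp: max_def divide_right_mono intro: divide_nonneg_pos)
      finally have "real n \<le> real T1 + (1 + \<epsilon>) * Lg / a + 1" unfolding n_def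
        using Lp eps a by (simp add: max_def)
      then have "real k \<le> real T1 + 1 + (1 + \<epsilon>) / a * Lg" using k(2) by simp
      also have "\<dots> \<le> (r - (1 + \<epsilon>) / a) * Lg + (1 + \<epsilon>) / a * Lg"
      proof -
        have "(real T1 + 1) / (r - (1 + \<epsilon>) / a) \<le> Lg" using M LM by (simp add: Lg_def)
        then have "real T1 + 1 \<le> (r - (1 + \<epsilon>) / a) * Lg" using q by (simp add: field_simps)
        then show ?thesis by simp
      qed
      also have "\<dots> = r * Lg" by (simp add: algebra_simps)
      finally have "real k / Lg \<le> r" using Lp by (simp add: field_simps)
      then show "ereal_of_enat (\<tau> \<delta>) / ereal (ln (1 / \<delta>)) \<le> ereal r"
        using k Lp by (simp add: Lg_def[symmetric])
    qed
    then have "Limsup (at_right 0) (\<lambda>\<delta>. ereal_of_enat (\<tau> \<delta>) / ereal (ln (1 / \<delta>))) \<le> ereal r"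
      by (rule Limsup_bounded)
    then show "Limsup (at_right 0) (\<lambda>\<delta>. ereal_of_enat (\<tau> \<delta>) / ereal (ln (1 / \<delta>))) \<le> ereal (1 / D) + ereal e"
      by (simp add: r_def)
  qed
qed

lemma (in prob_space) indep_sets_reindex:
  assumes "indep_sets F (f ` I)" "inj_on f I"
  shows "indep_sets (\<lambda>i. F (f i)) I"
proof (rule indep_setsI)
  fix i assume "i \<in> I" then show "F (f i) \<subseteq> events" using assms(1) unfolding indep_sets_def by auto
next
  fix A J assume J: "J \<noteq> {}" "J \<subseteq> I" "finite J" "\<forall>j\<in>J. A j \<in> F (f j)"
  define A' where "A' = (\<lambda>x. A (the_inv_into J f x))"
  have inj: "inj_on f J" using assms(2) J(2) inj_on_subset by blast
  have A'f: "A' (f j) = A j" if "j \<in> J" for j using the_inv_into_f_f[OF inj that] by (simp add: A'_def)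
  have "prob (\<Inter>x\<in>f ` J. A' x) = (\<Prod>x\<in>f ` J. prob (A' x))"
    by (rule indep_setsD[OF assms(1)]) (use J A'f in auto)
  moreover have "(\<Inter>x\<in>f ` J. A' x) = (\<Inter>j\<in>J. A j)" using A'f by auto
  moreover have "(\<Prod>x\<in>f ` J. prob (A' x)) = (\<Prod>j\<in>J. prob (A' (f j)))" by (simp add: prod.reindex[OF inj])
  moreover have "\<dots> = (\<Prod>j\<in>J. prob (A j))" by (rule prod.cong) (auto simp: A'f)
  ultimately show "prob (\<Inter>j\<in>J. A j) = (\<Prod>j\<in>J. prob (A j))" by simp
qed

lemma (in prob_space) indep_vars_reindex:
  assumes "indep_vars M' X (f ` I)" "inj_on f I"
  shows "indep_vars (\<lambda>i. M' (f i)) (\<lambda>i. X (f i)) I"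
  using assms indep_sets_reindex[of "\<lambda>j. {X j -` A \<inter> space M | A. A \<in> sets (M' j)}" f I]
  unfolding indep_vars_def2 by auto

lemma beta_le:
  assumes "t \<ge> 1"
  shows "beta T I t \<delta> \<omega> \<le> 3 * real (card (set (leaves T))) * ln (1 + ln (real t))
          + real (card (set (leaves T))) * Cexp (ln (1 / \<delta>) / real (card (set (leaves T))))"
proof -
  have lt: "ln (1 + ln (real t)) \<ge> 0" using assms by simp
  have "(\<Sum>l\<in>set (leaves T). ln (1 + ln (real (Ncnt I l t \<omega>)))) \<le> (\<Sum>l\<in>set (leaves T). ln (1 + ln (real t)))"
  proof (rule sum_mono)
    fix l
    show "ln (1 + ln (real (Ncnt I l t \<omega>))) \<le> ln (1 + ln (real t))"
    proof (cases "Ncnt I l t \<omega> = 0")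
      case True
      then show ?thesis using lt by simp
    next
      case False
      then have "ln (real (Ncnt I l t \<omega>)) \<le> ln (real t)" "ln (real (Ncnt I l t \<omega>)) \<ge> 0"
        using Ncnt_le[of I l t \<omega>] by auto
      then show ?thesis by simp
    qed
  qed
  then show ?thesis by (simp add: beta_def)
qed

lemma B_ev:
  fixes K :: real
  assumes "K \<ge> 0" "\<epsilon> > 0"
  shows "\<exists>x0. \<forall>\<delta>. 0 < \<delta> \<longrightarrow> \<delta> < 1 \<longrightarrow> ln (1/\<delta>) \<ge> x0 \<longrightarrow> K * Cexp (ln (1 / \<delta>) / K) \<le> (1 + \<epsilon>) * ln (1/\<delta>)"
proof (cases "K = 0")
  case True
  show ?thesis by (rule exI[of _ 0]) (use True assms in auto)
next
  case False
  then have Kp: "K > 0" using assms by simp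
  obtain X where X: "\<And>x. x \<ge> X \<Longrightarrow> Cexp x \<le> (1 + \<epsilon>) * x"
    using Cexp_ev[OF assms(2)] unfolding eventually_at_top_linorder by blast
  show ?thesis
  proof (intro exI[of _ "K * X"] allI impI)
    fix \<delta> :: real assume "0 < \<delta>" "\<delta> < 1" "K * X \<le> ln (1 / \<delta>)"
    then have "ln (1/\<delta>) / K \<ge> X" using Kp by (simp add: field_simps)
    then have "Cexp (ln (1 / \<delta>) / K) \<le> (1 + \<epsilon>) * (ln (1/\<delta>) / K)" by (rule X)
    then have "K * Cexp (ln (1 / \<delta>) / K) \<le> K * ((1 + \<epsilon>) * (ln (1/\<delta>) / K))"
      using Kp by (intro mult_left_mono) auto
    also have "\<dots> = (1 + \<epsilon>) * ln (1/\<delta>)" using Kp by (simp add: field_simps)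
    finally show "K * Cexp (ln (1 / \<delta>) / K) \<le> (1 + \<epsilon>) * ln (1/\<delta>)" .
  qed
qed

theorem theorem4:
  fixes \<rho> :: "real measure" and \<Theta> :: "real set" and \<theta> :: real
    and T :: "'l mmtree" and \<mu> :: "'l \<Rightarrow> real" and w :: "'l \<Rightarrow> real"
    and M :: "'w measure" and Y :: "'l \<Rightarrow> nat \<Rightarrow> 'w \<Rightarrow> real" and U :: "'w \<Rightarrow> real"
    and I :: "nat \<Rightarrow> 'w \<Rightarrow> 'l"
  assumes fam: "exp_family \<rho> \<Theta>"
    and theta: "\<theta> \<in> mean_set \<rho> \<Theta>"
    and tree: "wf_tree T" "distinct (leaves T)"
    and mu: "\<forall>l\<in>set (leaves T). \<mu> l \<in> mean_set \<rho> \<Theta>"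
    and Vne: "Vval T \<mu> \<noteq> \<theta>"
    and weights: "is_w (dKL \<rho> \<Theta>) \<theta> (aval T \<theta> \<mu>) \<mu> T w"
    and P: "prob_space M"
    and indep: "prob_space.indep_vars M (\<lambda>_. borel)
                  (\<lambda>i. case i of None \<Rightarrow> U | Some (l, k) \<Rightarrow> Y l k)
                  (insert None (Some ` (set (leaves T) \<times> UNIV)))"
    and distr: "\<forall>l\<in>set (leaves T). \<forall>k. distr M borel (Y l k) = fam \<rho> \<Theta> (\<mu> l)"
    and I_leaf: "\<forall>t. \<forall>\<omega>\<in>space M. I t \<omega> \<in> set (leaves T)"
    and I_meas: "\<forall>t. I t \<in> measurable M (count_space UNIV)"
    and I_pred: "\<exists>f. \<forall>t\<ge>1. \<forall>\<omega>\<in>space M.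
                   I t \<omega> = f t (U \<omega>) (map (\<lambda>s. (I s \<omega>, obs I Y s \<omega>)) [1..<t])"
    and conv: "AE \<omega> in M. \<forall>l\<in>set (leaves T).
                 (\<lambda>t. real (Ncnt I l t \<omega>) / real t) \<longlonglongrightarrow> w l"
  shows "(\<forall>\<delta>\<in>{0<..<1}. AE \<omega> in M. tau \<rho> \<Theta> \<theta> T I Y \<delta> \<omega> < \<infinity>) \<and>
         (AE \<omega> in M. Limsup (at_right 0)
             (\<lambda>\<delta>. ereal_of_enat (tau \<rho> \<Theta> \<theta> T I Y \<delta> \<omega>) / ereal (ln (1 / \<delta>)))
           \<le> ereal (1 / dval (dKL \<rho> \<Theta>) \<theta> (aval T \<theta> \<mu>) \<mu> T))"
proof -
  interpret P: prob_space M by (rule P)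
  define win where "win = aval T \<theta> \<mu>"
  define D where "D = dval (dKL \<rho> \<Theta>) \<theta> win \<mu> T"
  define L where "L = set (leaves T)"
  define K where "K = real (card L)"
  have Dpos: "D > 0" unfolding D_def
  proof (rule dval_pos[OF tree(1)])
    show "\<forall>l\<in>set (leaves T). \<mu> l \<noteq> \<theta> \<longrightarrow> dKL \<rho> \<Theta> (\<mu> l) \<theta> > 0"
      using dKL_pos[OF fam _ theta] mu by auto
    show "if win then \<theta> < Vval T \<mu> else Vval T \<mu> < \<theta>"
      using Vne by (auto simp: win_def aval_def)
  qed
  have slln_l: "AE \<omega> in M. (\<lambda>n. (\<Sum>k<n. Y l k \<omega>) / real n) \<longlonglongrightarrow> \<mu> l" if lL: "l \<in> L" for l
  proof -
    have sub: "(\<lambda>k. Some (l, k)) ` UNIV \<subseteq> insert None (Some ` (set (leaves T) \<times> UNIV))"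
      using lL by (auto simp: L_def)
    have "P.indep_vars (\<lambda>_. borel) (\<lambda>i. case i of None \<Rightarrow> U | Some (l, k) \<Rightarrow> Y l k) ((\<lambda>k. Some (l, k)) ` UNIV)"
      by (rule P.indep_vars_subset[OF indep sub])
    then have "P.indep_vars (\<lambda>_. borel) (\<lambda>k. (\<lambda>i. case i of None \<Rightarrow> U | Some (l, k) \<Rightarrow> Y l k) (Some (l, k))) UNIV"
      by (rule P.indep_vars_reindex) (auto simp: inj_on_def)
    then have ind: "P.indep_vars (\<lambda>_. borel) (Y l) UNIV" by simp
    have muX: "\<mu> l \<in> mean_set \<rho> \<Theta>" using mu lL by (auto simp: L_def)
    define F where "F = fam \<rho> \<Theta> (\<mu> l)"
    have dis: "distr M borel (Y l k) = F" for k using distr lL by (simp add: F_def L_def)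
    have F_eq: "F = density \<rho> (\<lambda>x. ennreal (pd \<rho> (nat_param \<rho> \<Theta> (\<mu> l)) x))"
      by (simp add: F_def fam_def ef_dist_eq[OF fam])
    have sq: "integrable F (\<lambda>x. x^2)" unfolding F_eq
    proof (subst integrable_real_density)
      show "integrable \<rho> (\<lambda>x. pd \<rho> (nat_param \<rho> \<Theta> (\<mu> l)) x * x^2)"
        by (rule int_pd_x2[OF fam np_props(1)[OF fam muX]])
    qed (auto intro!: AE_I2 less_imp_le[OF pd_pos[OF fam]] meas_rho[OF fam] pd_meas[OF fam])
    have mean: "(\<integral>x. x \<partial>F) = \<mu> l"
      using np_props(2)[OF fam muX] by (simp add: F_def fam_def ef_mean_def)
    show ?thesis using P.slln[OF ind dis sq] mean by simp
  qed
  have AEs: "AE \<omega> in M. \<forall>l\<in>L. (\<lambda>n. (\<Sum>k<n. Y l k \<omega>) / real n) \<longlonglongrightarrow> \<mu> l"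
    using slln_l by (subst AE_ball_countable) (auto simp: L_def intro: countable_finite)
  have H: "AE \<omega> in M. (\<forall>\<delta>. tau \<rho> \<Theta> \<theta> T I Y \<delta> \<omega> < \<infinity>) \<and>
      Limsup (at_right 0) (\<lambda>\<delta>. ereal_of_enat (tau \<rho> \<Theta> \<theta> T I Y \<delta> \<omega>) / ereal (ln (1 / \<delta>))) \<le> ereal (1 / D)"
    using AEs conv
  proof eventually_elim
    case (elim \<omega>)
    have Zev: "eventually (\<lambda>t. Zstat \<rho> \<Theta> \<theta> T I Y t \<omega> \<ge> ereal (real t * c)) sequentially"
      if "0 < c" "c < D" for c
      by (rule core[OF fam theta mu weights[folded win_def] Dpos[unfolded D_def]])
         (use elim that in \<open>auto simp: L_def D_def\<close>)
    have K0: "K \<ge> 0" by (simp add: K_def)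
    show ?case
    proof (rule finish[where Z="\<lambda>t. Zstat \<rho> \<Theta> \<theta> T I Y t \<omega>" and \<beta>="\<lambda>t \<delta>. beta T I t \<delta> \<omega>"
          and B="\<lambda>\<delta>. K * Cexp (ln (1 / \<delta>) / K)" and A="3 * K"])
      show "\<And>c. 0 < c \<Longrightarrow> c < D \<Longrightarrow> eventually (\<lambda>t. Zstat \<rho> \<Theta> \<theta> T I Y t \<omega> \<ge> ereal (real t * c)) sequentially"
        by (rule Zev)
      show "D > 0" by (rule Dpos)
      show "\<And>t \<delta>. 1 \<le> t \<Longrightarrow> beta T I t \<delta> \<omega> \<le> 3 * K * ln (1 + ln (real t)) + K * Cexp (ln (1 / \<delta>) / K)"
        unfolding K_def L_def by (rule beta_le)
      show "0 \<le> 3 * K" using K0 by simp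
      show "\<And>\<epsilon>. 0 < \<epsilon> \<Longrightarrow> \<exists>x0. \<forall>\<delta>. 0 < \<delta> \<longrightarrow> \<delta> < 1 \<longrightarrow> x0 \<le> ln (1 / \<delta>) \<longrightarrow> K * Cexp (ln (1 / \<delta>) / K) \<le> (1 + \<epsilon>) * ln (1 / \<delta>)"
        using B_ev K0 by blast
      show "\<And>\<delta>. tau \<rho> \<Theta> \<theta> T I Y \<delta> \<omega> = (if \<exists>t. ereal (beta T I t \<delta> \<omega>) \<le> Zstat \<rho> \<Theta> \<theta> T I Y t \<omega>
          then enat (LEAST t. ereal (beta T I t \<delta> \<omega>) \<le> Zstat \<rho> \<Theta> \<theta> T I Y t \<omega>) else \<infinity>)"
        by (simp add: tau_def)
    qed
  qed
  show ?thesis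
  proof
    show "\<forall>\<delta>\<in>{0<..<1}. AE \<omega> in M. tau \<rho> \<Theta> \<theta> T I Y \<delta> \<omega> < \<infinity>"
      using H by (auto elim: eventually_mono)
    show "AE \<omega> in M. Limsup (at_right 0) (\<lambda>\<delta>. ereal_of_enat (tau \<rho> \<Theta> \<theta> T I Y \<delta> \<omega>) / ereal (ln (1 / \<delta>)))
           \<le> ereal (1 / dval (dKL \<rho> \<Theta>) \<theta> (aval T \<theta> \<mu>) \<mu> T)"
      using H by (rule eventually_mono) (simp add: D_def win_def)
  qed
qed

end
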